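(* Let $p,q\in[1,\infty]$, let $\varphi_0,\varphi_1,\varphi$ be positive non-degenerate quasi-concave functions on $(0,\infty)$, let $\{\widetilde t_k\}$ be a discretizing sequence for $\varphi(\varphi_0,\varphi_1)$, and let $\overline l_q=\big(l_q,\,l_q(1/\widetilde t_k)\big)$. Then $$\left((\overline l_q)_{\varphi_0,p},(\overline l_q)_{\varphi_1,p}\right)_{\varphi,p}=l_p\Big(\frac1{\varphi(\varphi_0,\varphi_1)(\widetilde t_i)}\Big).$$
   Context: A function $\psi:(0,\infty)\to(0,\infty)$ is non-degenerate quasi-concave if it is non-decreasing, $\psi(t)/t$ is non-increasing, and $\lim_{t\to0+}\psi(t)=\lim_{t\to\infty}\psi(t)/t=\lim_{t\to0+}t/\psi(t)=\lim_{t\to\infty}1/\psi(t)=0$. $\varphi(\varphi_0,\varphi_1)(t)=\varphi_0(t)\varphi(\varphi_1(t)/\varphi_0(t))$. A positive sequence is strongly increasing if $\inf_k a_{k+1}/a_k\ge2$, strongly decreasing if $\sup_k a_{k+1}/a_k\le1/2$. A strongly increasing $\{s_k\}_{k\in\mathbb Z}$ is a discretizing sequence for $\psi$ if $\{\psi(s_k)\}$ is strongly increasing, $\{\psi(s_k)/s_k\}$ is strongly decreasing, and $\mathbb Z=\mathbb Z_1\sqcup\mathbb Z_2$ with $\psi(s_{k+1})\le2\psi(s_k)$ for $k\in\mathbb Z_1$ and $\psi(s_k)/s_k\le2\psi(s_{k+1})/s_{k+1}$ for $k\in\mathbb Z_2$. For a Banach couple $\overline X$, $K(t,x;\overline X)=\inf_{x=x_0+x_1}(\|x_0\|_{X_0}+t\|x_1\|_{X_1})$,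 and $\overline X_{\psi,p}$ is the space of $x\in X_0+X_1$ with $\big(\sum_k(K(s_k,x;\overline X)/\psi(s_k))^p\big)^{1/p}<\infty$ (sup if $p=\infty$), $\{s_k\}$ a fixed discretizing sequence for $\psi$. For a positive weight $u$, $l_q(u)=\{a:\{a_iu_i\}\in l_q\}$ with norm $\|\{a_iu_i\}\|_{l_q}$. Sequences are indexed by $\mathbb Z$; equality means equal sets with equivalent norms. *)

theory Defs
  imports "HOL-Analysis.Analysis"
begin

definition qconcave :: "(real \<Rightarrow> real) \<Rightarrow> bool" where
  "qconcave \<psi> \<longleftrightarrow>
     (\<forall>t>0. \<psi> t > 0) \<and>
     mono_on {0<..} \<psi> \<and>
     antimono_on {0<..} (\<lambda>t. \<psi> t / t) \<and>
     (\<psi> \<longlongrightarrow> 0) (at_right 0) \<and>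
     ((\<lambda>t. \<psi> t / t) \<longlongrightarrow> 0) at_top \<and>
     ((\<lambda>t. t / \<psi> t) \<longlongrightarrow> 0) (at_right 0) \<and>
     ((\<lambda>t. 1 / \<psi> t) \<longlongrightarrow> 0) at_top"

text \<open>phi(phi0,phi1)(t) = phi0(t) * phi(phi1(t)/phi0(t)).\<close>
definition fcomp :: "(real \<Rightarrow> real) \<Rightarrow> (real \<Rightarrow> real) \<Rightarrow> (real \<Rightarrow> real) \<Rightarrow> real \<Rightarrow> real" where
  "fcomp \<phi> \<phi>0 \<phi>1 t = \<phi>0 t * \<phi> (\<phi>1 t / \<phi>0 t)"

definition strongly_inc :: "(int \<Rightarrow> real) \<Rightarrow> bool" where
  "strongly_inc a \<longleftrightarrow> (\<forall>k. a k > 0) \<and> (\<forall>k. a (k+1) \<ge> 2 * a k)"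

definition strongly_dec :: "(int \<Rightarrow> real) \<Rightarrow> bool" where
  "strongly_dec a \<longleftrightarrow> (\<forall>k. a k > 0) \<and> (\<forall>k. a (k+1) \<le> a k / 2)"

definition discretizing :: "(int \<Rightarrow> real) \<Rightarrow> (real \<Rightarrow> real) \<Rightarrow> bool" where
  "discretizing s \<psi> \<longleftrightarrow>
     strongly_inc s \<and>
     strongly_inc (\<lambda>k. \<psi> (s k)) \<and>
     strongly_dec (\<lambda>k. \<psi> (s k) / s k) \<and>
     (\<exists>Z1 Z2. Z1 \<union> Z2 = UNIV \<and> Z1 \<inter> Z2 = {} \<and>
        (\<forall>k\<in>Z1. \<psi> (s (k+1)) \<le> 2 * \<psi> (s k)) \<and>
        (\<forall>k\<in>Z2. \<psi> (s k) / s k \<le> 2 * (\<psi> (s (k+1)) / s (k+1))))"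

text \<open>Sequence spaces over Z are modelled by extended norms
  N :: (int => real) => ennreal; the space is {x. N x < top}.\<close>

definition enn_pow :: "real \<Rightarrow> ennreal \<Rightarrow> ennreal" where
  "enn_pow r b = (if b = top then top else ennreal (enn2real b powr r))"

definition lp_enn :: "ennreal \<Rightarrow> (int \<Rightarrow> ennreal) \<Rightarrow> ennreal" where
  "lp_enn p b = (if p = top then (SUP k. b k)
     else enn_pow (1 / enn2real p) (\<Sum>\<^sub>\<infinity>k\<in>UNIV. enn_pow (enn2real p) (b k)))"

text \<open>Norm of the weighted space l_q(u): norm of (a_i u_i) in l_q.\<close>
definition lqw :: "ennreal \<Rightarrow> (int \<Rightarrow> real) \<Rightarrow> (int \<Rightarrow> real) \<Rightarrow> ennreal" where
  "lqw q u a = lp_enn q (\<lambda>i. ennreal \<bar>a i * u i\<bar>)"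

definition Kfun :: "((int \<Rightarrow> real) \<Rightarrow> ennreal) \<Rightarrow> ((int \<Rightarrow> real) \<Rightarrow> ennreal)
    \<Rightarrow> real \<Rightarrow> (int \<Rightarrow> real) \<Rightarrow> ennreal" where
  "Kfun N0 N1 t x = (INF y \<in> {(x0, x1). \<forall>i. x i = x0 i + x1 i}. N0 (fst y) + ennreal t * N1 (snd y))"

text \<open>Norm of the K-space (X0,X1)_{psi,p} w.r.t. the discretizing sequence s.\<close>
definition Kspace :: "((int \<Rightarrow> real) \<Rightarrow> ennreal) \<Rightarrow> ((int \<Rightarrow> real) \<Rightarrow> ennreal)
    \<Rightarrow> (int \<Rightarrow> real) \<Rightarrow> (real \<Rightarrow> real) \<Rightarrow> ennreal \<Rightarrow> (int \<Rightarrow> real) \<Rightarrow> ennreal" where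
  "Kspace N0 N1 s \<psi> p x = lp_enn p (\<lambda>k. Kfun N0 N1 (s k) x / ennreal (\<psi> (s k)))"

text \<open>Equal sets with equivalent norms.\<close>
definition equiv_norms :: "('a \<Rightarrow> ennreal) \<Rightarrow> ('a \<Rightarrow> ennreal) \<Rightarrow> bool" where
  "equiv_norms N M \<longleftrightarrow> (\<exists>c C. 0 < c \<and> 0 < C \<and>
     (\<forall>x. ennreal c * N x \<le> M x \<and> M x \<le> ennreal C * N x))"

end

theory Submission
  imports Defs
begin

definition zsum :: "(int \<Rightarrow> ennreal) \<Rightarrow> ennreal" where
  "zsum f = (\<integral>\<^sup>+k. f k \<partial>count_space UNIV)"

lemma zsum_SUP: "zsum f = (SUP F\<in>{F. finite F \<and> F \<subseteq> UNIV}. sum f F)"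
proof (rule antisym)
  have bij: "bij_betw (from_nat_into (UNIV::int set)) UNIV UNIV"
    by (rule bij_betw_from_nat_into) (auto simp: infinite_UNIV_int)
  have "zsum f = (\<integral>\<^sup>+n. f (from_nat_into UNIV n) \<partial>count_space UNIV)"
    unfolding zsum_def by (rule nn_integral_bij_count_space[OF bij, symmetric])
  also have "\<dots> = (\<Sum>n. f (from_nat_into UNIV n))"
    by (rule nn_integral_count_space_nat)
  also have "\<dots> = (SUP n. \<Sum>i<n. f (from_nat_into UNIV i))"
    by (rule suminf_eq_SUP)
  also have "\<dots> \<le> (SUP F\<in>{F. finite F \<and> F \<subseteq> UNIV}. sum f F)"
  proof (rule SUP_least)
    fix n
    have "(\<Sum>i<n. f (from_nat_into UNIV i)) = sum f (from_nat_into UNIV ` {..<n})"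
      using bij by (subst sum.reindex) (auto simp: bij_betw_def inj_on_def)
    also have "\<dots> \<le> (SUP F\<in>{F. finite F \<and> F \<subseteq> UNIV}. sum f F)"
      by (rule SUP_upper) auto
    finally show "(\<Sum>i<n. f (from_nat_into UNIV i)) \<le> \<dots>" .
  qed
  finally show "zsum f \<le> (SUP F\<in>{F. finite F \<and> F \<subseteq> UNIV}. sum f F)" .
next
  show "(SUP F\<in>{F. finite F \<and> F \<subseteq> UNIV}. sum f F) \<le> zsum f"
  proof (rule SUP_least)
    fix F :: "int set" assume "F \<in> {F. finite F \<and> F \<subseteq> UNIV}"
    then have fin: "finite F" by auto
    have "sum f F = (\<integral>\<^sup>+k. f k \<partial>count_space F)"
      using fin by (simp add: nn_integral_count_space_finite)
    also have "\<dots> = (\<integral>\<^sup>+k. f k * indicator F k \<partial>count_space UNIV)"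
      by (rule nn_integral_count_space_indicator) simp
    also have "\<dots> \<le> zsum f"
      unfolding zsum_def by (rule nn_integral_mono) (auto simp: indicator_def)
    finally show "sum f F \<le> zsum f" .
  qed
qed

lemma infsum_zsum: "infsum f UNIV = zsum f"
  by (subst nonneg_infsum_complete) (auto simp: zsum_SUP)

lemma zsum_mono: "(\<And>k. f k \<le> g k) \<Longrightarrow> zsum f \<le> zsum g"
  unfolding zsum_def by (rule nn_integral_mono) auto

lemma zsum_add: "zsum (\<lambda>k. f k + g k) = zsum f + zsum g"
  unfolding zsum_def by (rule nn_integral_add) auto

lemma zsum_cmult: "zsum (\<lambda>k. c * f k) = c * zsum f"
  unfolding zsum_def by (rule nn_integral_cmult) auto

lemma zsum_ge: "f k \<le> zsum f"
  unfolding zsum_def by (rule nn_integral_ge_point) auto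

lemma zsum_swap: "zsum (\<lambda>i. zsum (\<lambda>k. f i k)) = zsum (\<lambda>k. zsum (\<lambda>i. f i k))"
  unfolding zsum_def
  by (rule nn_integral_count_space_nn_integral[symmetric]) auto

lemma zsum_single: "zsum (\<lambda>k. if k = i then c else 0) = c"
proof -
  have "zsum (\<lambda>k. if k = i then c else 0) = (\<Sum>k\<in>{i}. if k = i then c else 0)"
    unfolding zsum_def by (rule nn_integral_count_space') auto
  then show ?thesis by simp
qed

lemma ep_top[simp]: "enn_pow r top = top"
  by (simp add: enn_pow_def)

lemma ep_ennreal: "0 \<le> x \<Longrightarrow> enn_pow r (ennreal x) = ennreal (x powr r)"
  by (simp add: enn_pow_def)

lemma ep_0[simp]: "enn_pow r 0 = 0"
  by (simp add: enn_pow_def)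

lemma ep_mono: assumes "0 \<le> r" "a \<le> b" shows "enn_pow r a \<le> enn_pow r b"
proof (cases b)
  case (real y)
  then show ?thesis
  proof (cases a)
    case (real x)
    then have "x \<le> y" using assms \<open>b = ennreal y\<close> \<open>0 \<le> y\<close> by simp
    then show ?thesis using real assms \<open>b = ennreal y\<close> \<open>0 \<le> y\<close>
      by (simp add: ep_ennreal powr_mono2)
  next
    case top then show ?thesis using assms real by (metis ennreal_neq_top top_unique)
  qed
qed simp

lemma ep_mult: assumes "0 < r" shows "enn_pow r (a * b) = enn_pow r a * enn_pow r b"
proof (cases a)
  case (real x)
  show ?thesis
  proof (cases b)
    case (real y)
    have "enn_pow r (a * b) = ennreal ((x * y) powr r)"
      using \<open>a = ennreal x\<close> real \<open>0 \<le> x\<close> by (simp add: ennreal_mult'[symmetric] ep_ennreal)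
    also have "\<dots> = ennreal (x powr r) * ennreal (y powr r)"
      using \<open>0 \<le> x\<close> real by (simp add: powr_mult ennreal_mult')
    finally show ?thesis using \<open>a = ennreal x\<close> \<open>0 \<le> x\<close> real by (simp add: ep_ennreal)
  next
    case top
    show ?thesis
    proof (cases "x = 0")
      case True then show ?thesis using \<open>a = ennreal x\<close> top by simp
    next
      case False then show ?thesis using \<open>a = ennreal x\<close> \<open>0 \<le> x\<close> top assms
        by (simp add: ep_ennreal ennreal_mult_top)
    qed
  qed
next
  case top
  show ?thesis
  proof (cases b)
    case (real y)
    show ?thesis
    proof (cases "y = 0")
      case True then show ?thesis using real top by simp
    next
      case False then show ?thesis using real top assms
        by (simp add: ep_ennreal ennreal_top_mult)
    qed
  qed (use top in simp)
qed

lemma ep_ep: assumes "0 < r" "0 < s" shows "enn_pow r (enn_pow s b) = enn_pow (r * s) b"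
proof (cases b)
  case (real x)
  then show ?thesis using assms by (simp add: ep_ennreal powr_powr mult.commute)
qed (simp add: enn_pow_def)

lemma ep_inv1: assumes "0 < r" shows "enn_pow (1/r) (enn_pow r b) = b"
proof (cases b)
  case (real x)
  then show ?thesis using assms by (cases "x = 0") (simp_all add: ep_ennreal powr_powr)
qed simp

lemma ep_inv2: assumes "0 < r" shows "enn_pow r (enn_pow (1/r) b) = b"
proof (cases b)
  case (real x)
  then show ?thesis using assms by (cases "x = 0") (simp_all add: ep_ennreal powr_powr)
qed simp

lemma ep_one[simp]: "enn_pow 1 b = b"
proof (cases b)
  case (real x)
  then show ?thesis by (cases "x = 0") (simp_all add: ep_ennreal)
qed simp

lemma ep_le_self: assumes "1 \<le> r" "b \<le> 1" shows "enn_pow r b \<le> b"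
proof (cases b)
  case (real x)
  then have "x \<le> 1" using assms by (simp add: ennreal_le_1)
  then show ?thesis using real assms
    by (simp add: ep_ennreal) (metis powr_one powr_mono')
qed (use assms in auto)

lemma ep_add: assumes "0 < r" shows "enn_pow r (a + b) \<le> ennreal (2 powr r) * (enn_pow r a + enn_pow r b)"
proof -
  have "a + b \<le> 2 * max a b"
    by (auto simp: max_def mult_2 intro: add_mono)
  then have "enn_pow r (a + b) \<le> enn_pow r (2 * max a b)"
    using assms by (intro ep_mono) auto
  also have "\<dots> = enn_pow r 2 * enn_pow r (max a b)"
    using assms by (rule ep_mult)
  also have "enn_pow r 2 = ennreal (2 powr r)"
    using ep_ennreal[of 2 r] by simp
  also have "enn_pow r (max a b) \<le> enn_pow r a + enn_pow r b"
    by (cases "a \<le> b") (auto simp: max_def add_increasing add_increasing2)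
  finally show ?thesis by (simp add: mult_left_mono)
qed

lemma ep_nonneg_powr: fixes y T r :: real assumes "1 \<le> r" "0 \<le> y" "y \<le> T"
  shows "y powr r \<le> y * T powr (r - 1)"
proof (cases "y = 0")
  case False
  have "y powr r = y powr (1 + (r - 1))" by simp
  also have "\<dots> = y powr 1 * y powr (r - 1)" by (rule powr_add[of y 1 "r - 1"])
  finally have "y powr r = y * y powr (r - 1)"
    using assms by simp
  also have "\<dots> \<le> y * T powr (r - 1)"
    using assms by (intro mult_left_mono powr_mono2) auto
  finally show ?thesis .
qed (use assms in simp)

lemma ep_sum: assumes "1 \<le> r" shows "zsum (\<lambda>k. enn_pow r (f k)) \<le> enn_pow r (zsum f)"
proof (cases "zsum f")
  case (real T)
  have fk: "f k = ennreal (enn2real (f k))" "enn2real (f k) \<le> T" for k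
  proof -
    have le: "f k \<le> ennreal T" using zsum_ge[of f k] real by simp
    then show "f k = ennreal (enn2real (f k))"
      by (metis ennreal_enn2real_if ennreal_neq_top top_unique)
    have "enn2real (f k) \<le> enn2real (ennreal T)"
      using le by (intro enn2real_mono) auto
    then show "enn2real (f k) \<le> T" using real by simp
  qed
  have "zsum (\<lambda>k. enn_pow r (f k)) \<le> zsum (\<lambda>k. f k * ennreal (T powr (r - 1)))"
  proof (rule zsum_mono)
    fix k
    have "enn_pow r (f k) = ennreal (enn2real (f k) powr r)"
      by (subst fk(1)) (simp add: ep_ennreal)
    also have "\<dots> \<le> ennreal (enn2real (f k) * T powr (r - 1))"
      using fk(2)[of k] assms by (intro ennreal_leI ep_nonneg_powr) auto
    also have "\<dots> = f k * ennreal (T powr (r - 1))"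
      by (subst (2) fk(1)) (simp add: ennreal_mult)
    finally show "enn_pow r (f k) \<le> f k * ennreal (T powr (r - 1))" .
  qed
  also have "\<dots> = ennreal (T powr (r - 1)) * zsum f"
    using zsum_cmult[of "ennreal (T powr (r - 1))" f] by (simp add: mult.commute)
  also have "\<dots> = ennreal (T * T powr (r - 1))"
    using real by (simp add: ennreal_mult mult.commute)
  also have "\<dots> = enn_pow r (zsum f)"
  proof (cases "T = 0")
    case False
    then show ?thesis using real assms by (simp add: ep_ennreal powr_diff)
  qed (use real in simp)
  finally show ?thesis .
qed simp

lemma p_cases:
  assumes "1 \<le> (p::ennreal)"
  obtains "p = top" | P where "p = ennreal P" "1 \<le> P"
proof (cases p)
  case (real P)
  then have "1 \<le> P" using assms by (simp add: ennreal_1[symmetric] del: ennreal_1)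
  then show ?thesis using real that by simp
qed (use that in simp)

lemma lp_fin: assumes "1 \<le> P" shows "lp_enn (ennreal P) b = enn_pow (1/P) (zsum (\<lambda>k. enn_pow P (b k)))"
  using assms by (simp add: lp_enn_def infsum_zsum)

lemma lp_top: "lp_enn top b = (SUP k. b k)"
  by (simp add: lp_enn_def)

lemma lp_pow: assumes "1 \<le> P" shows "enn_pow P (lp_enn (ennreal P) b) = zsum (\<lambda>k. enn_pow P (b k))"
  using assms by (simp add: lp_fin ep_inv2)

lemma lp_ge: assumes "1 \<le> p" shows "b k \<le> lp_enn p b"
  using assms
proof (cases rule: p_cases)
  case 1 then show ?thesis by (simp add: lp_top SUP_upper)
next
  case (2 P)
  have "enn_pow P (b k) \<le> zsum (\<lambda>k. enn_pow P (b k))" by (rule zsum_ge)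
  then have "enn_pow (1/P) (enn_pow P (b k)) \<le> enn_pow (1/P) (zsum (\<lambda>k. enn_pow P (b k)))"
    using 2 by (intro ep_mono) auto
  then show ?thesis using 2 by (simp add: lp_fin ep_inv1)
qed

lemma lp_mono: assumes "1 \<le> p" "\<And>k. a k \<le> b k" shows "lp_enn p a \<le> lp_enn p b"
  using assms(1)
proof (cases rule: p_cases)
  case 1 then show ?thesis using assms by (simp add: lp_top SUP_mono' SUP_mono)
next
  case (2 P)
  have "zsum (\<lambda>k. enn_pow P (a k)) \<le> zsum (\<lambda>k. enn_pow P (b k))"
    using 2 assms by (intro zsum_mono ep_mono) auto
  then show ?thesis using 2 by (simp add: lp_fin ep_mono)
qed

lemma lp_le_zsum: assumes "1 \<le> p" shows "lp_enn p b \<le> zsum b"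
  using assms
proof (cases rule: p_cases)
  case 1 then show ?thesis by (simp add: lp_top SUP_least zsum_ge)
next
  case (2 P)
  have "zsum (\<lambda>k. enn_pow P (b k)) \<le> enn_pow P (zsum b)"
    using 2 by (intro ep_sum) auto
  then have "enn_pow (1/P) (zsum (\<lambda>k. enn_pow P (b k))) \<le> enn_pow (1/P) (enn_pow P (zsum b))"
    using 2 by (intro ep_mono) auto
  then show ?thesis using 2 by (simp add: lp_fin ep_inv1)
qed

lemma lp_fin_le:
  assumes "1 \<le> P" "0 \<le> D"
    and "zsum (\<lambda>k. enn_pow P (a k)) \<le> ennreal D * zsum (\<lambda>k. enn_pow P (b k))"
  shows "lp_enn (ennreal P) a \<le> ennreal (D powr (1/P)) * lp_enn (ennreal P) b"
proof -
  have "lp_enn (ennreal P) a \<le> enn_pow (1/P) (ennreal D * zsum (\<lambda>k. enn_pow P (b k)))"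
    unfolding lp_fin[OF assms(1)] using assms by (intro ep_mono) auto
  also have "\<dots> = enn_pow (1/P) (ennreal D) * lp_enn (ennreal P) b"
    unfolding lp_fin[OF assms(1)] using assms by (intro ep_mult) auto
  finally show ?thesis using assms by (simp add: ep_ennreal)
qed

lemma ennreal_div_eq: "0 < c \<Longrightarrow> a / ennreal c = a * ennreal (1 / c)"
  by (simp add: divide_ennreal_def inverse_ennreal inverse_eq_divide)

lemma zsum_shift_nat:
  fixes f :: "nat \<Rightarrow> ennreal"
  shows "zsum (\<lambda>k. if k0 \<le> k then f (nat (k - k0)) else 0) = (\<Sum>n. f n)"
proof -
  have bij: "bij_betw (\<lambda>n::nat. k0 + int n) UNIV {k0..}"
    by (rule bij_betwI[where g="\<lambda>k. nat (k - k0)"]) auto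
  have "zsum (\<lambda>k. if k0 \<le> k then f (nat (k - k0)) else 0)
      = (\<integral>\<^sup>+k. (if k0 \<le> k then f (nat (k - k0)) else 0) * indicator {k0..} k \<partial>count_space UNIV)"
    unfolding zsum_def by (intro nn_integral_cong) (auto simp: indicator_def)
  also have "\<dots> = (\<integral>\<^sup>+k. (if k0 \<le> k then f (nat (k - k0)) else 0) \<partial>count_space {k0..})"
    by (rule nn_integral_count_space_indicator[symmetric]) simp
  also have "\<dots> = (\<integral>\<^sup>+n. (if k0 \<le> k0 + int n then f (nat (k0 + int n - k0)) else 0) \<partial>count_space UNIV)"
    by (rule nn_integral_bij_count_space[OF bij, symmetric])
  also have "\<dots> = (\<integral>\<^sup>+n. f n \<partial>count_space UNIV)"
    by simp
  also have "\<dots> = (\<Sum>n. f n)" by (rule nn_integral_count_space_nat)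
  finally show ?thesis .
qed

lemma zsum_reflect: "zsum (\<lambda>k. f (- k)) = zsum f"
proof -
  have bij: "bij_betw (\<lambda>k::int. - k) UNIV UNIV"
    by (rule bij_betwI[where g="\<lambda>k. - k"]) auto
  show ?thesis unfolding zsum_def by (rule nn_integral_bij_count_space[OF bij])
qed

lemma geom_ennreal:
  fixes r A :: real assumes "0 \<le> r" "r < 1" "0 \<le> A"
  shows "(\<Sum>n. ennreal (A * r ^ n)) = ennreal (A / (1 - r))"
proof -
  have "(\<lambda>n. A * r ^ n) sums (A * (1 / (1 - r)))"
    using assms by (intro sums_mult geometric_sums) auto
  then have "(\<Sum>n. ennreal (A * r ^ n)) = ennreal (A * (1 / (1 - r)))"
    using assms by (intro suminf_ennreal_eq) auto
  then show ?thesis by simp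
qed

lemma geo_fwd:
  fixes w :: "int \<Rightarrow> real" and A r :: real
  assumes r: "0 \<le> r" "r < 1" and A: "0 \<le> A"
    and bdd: "\<And>k. k \<in> G \<Longrightarrow> L \<le> k"
    and wA: "\<And>k. k \<in> G \<Longrightarrow> w k \<le> A"
    and dec: "\<And>k k'. k \<in> G \<Longrightarrow> k' \<in> G \<Longrightarrow> k < k' \<Longrightarrow> w k' \<le> A * r ^ nat (k' - k)"
  shows "zsum (\<lambda>k. if k \<in> G then ennreal (w k) else 0) \<le> ennreal (A / (1 - r))"
proof (cases "G = {}")
  case True then show ?thesis by (simp add: zsum_def)
next
  case False
  define k0 where "k0 = (LEAST k. k \<in> G)"
  have ex: "\<exists>k. k \<in> G" using False by auto
  have k0G: "k0 \<in> G" and k0le: "\<And>k. k \<in> G \<Longrightarrow> k0 \<le> k"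
  proof -
    obtain k1 where k1: "k1 \<in> G" using ex by auto
    have "\<exists>k\<in>G. \<forall>k'\<in>G. k \<le> k'"
    proof -
      have fin: "finite (G \<inter> {L..k1})" by simp
      have ne: "G \<inter> {L..k1} \<noteq> {}" using k1 bdd by auto
      define m where "m = Min (G \<inter> {L..k1})"
      have "m \<in> G \<inter> {L..k1}" unfolding m_def using fin ne by (rule Min_in)
      moreover have "\<forall>k'\<in>G. m \<le> k'"
      proof
        fix k' assume "k' \<in> G"
        show "m \<le> k'"
        proof (cases "k' \<le> k1")
          case True then show ?thesis unfolding m_def using fin \<open>k' \<in> G\<close> bdd by (intro Min_le) auto
        next
          case False then show ?thesis using \<open>m \<in> G \<inter> {L..k1}\<close> by auto
        qed
      qed
      ultimately show ?thesis by auto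
    qed
    then obtain m where m: "m \<in> G" "\<And>k'. k' \<in> G \<Longrightarrow> m \<le> k'" by auto
    have "k0 = m" unfolding k0_def by (rule Least_equality) (use m in auto)
    then show "k0 \<in> G" "\<And>k. k \<in> G \<Longrightarrow> k0 \<le> k" using m by auto
  qed
  have "zsum (\<lambda>k. if k \<in> G then ennreal (w k) else 0)
      \<le> zsum (\<lambda>k. if k0 \<le> k then ennreal (A * r ^ nat (k - k0)) else 0)"
  proof (rule zsum_mono)
    fix k
    show "(if k \<in> G then ennreal (w k) else 0) \<le> (if k0 \<le> k then ennreal (A * r ^ nat (k - k0)) else 0)"
    proof (cases "k \<in> G")
      case True
      have "w k \<le> A * r ^ nat (k - k0)"
      proof (cases "k = k0")
        case True then show ?thesis using wA k0G by simp
      next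
        case False then show ?thesis using dec[OF k0G \<open>k \<in> G\<close>] k0le[OF \<open>k \<in> G\<close>] by simp
      qed
      then show ?thesis using True k0le by (auto intro: ennreal_leI)
    qed simp
  qed
  also have "\<dots> = (\<Sum>n. ennreal (A * r ^ n))"
    by (rule zsum_shift_nat[where f="\<lambda>n. ennreal (A * r ^ n)"])
  also have "\<dots> = ennreal (A / (1 - r))" using r A by (rule geom_ennreal)
  finally show ?thesis .
qed

lemma geo_bwd:
  fixes w :: "int \<Rightarrow> real" and A r :: real
  assumes r: "0 \<le> r" "r < 1" and A: "0 \<le> A"
    and bdd: "\<And>k. k \<in> G \<Longrightarrow> k \<le> U"
    and wA: "\<And>k. k \<in> G \<Longrightarrow> w k \<le> A"
    and dec: "\<And>k k'. k \<in> G \<Longrightarrow> k' \<in> G \<Longrightarrow> k < k' \<Longrightarrow> w k \<le> A * r ^ nat (k' - k)"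
  shows "zsum (\<lambda>k. if k \<in> G then ennreal (w k) else 0) \<le> ennreal (A / (1 - r))"
proof -
  have "zsum (\<lambda>k. if k \<in> G then ennreal (w k) else 0)
      = zsum (\<lambda>k. if k \<in> uminus ` G then ennreal (w (- k)) else 0)"
    by (subst zsum_reflect[symmetric]) (auto intro!: arg_cong[where f=zsum] simp: image_iff)
  also have "\<dots> \<le> ennreal (A / (1 - r))"
  proof (rule geo_fwd[OF r A, where L="- U"])
    fix k assume "k \<in> uminus ` G" then show "- U \<le> k" using bdd by auto
  next
    fix k assume "k \<in> uminus ` G" then show "w (- k) \<le> A" using wA by auto
  next
    fix k k' assume "k \<in> uminus ` G" "k' \<in> uminus ` G" "k < k'"
    then show "w (- k') \<le> A * r ^ nat (k' - k)"
      using dec[of "- k'" "- k"] by auto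
  qed
  finally show ?thesis .
qed

lemma sinc_pos: "strongly_inc a \<Longrightarrow> 0 < a k"
  by (simp add: strongly_inc_def)

lemma sdec_pos: "strongly_dec a \<Longrightarrow> 0 < a k"
  by (simp add: strongly_dec_def)

lemma sinc_pow: assumes "strongly_inc a" "j \<le> j'" shows "2 ^ nat (j' - j) * a j \<le> a j'"
proof -
  have "\<forall>j. 2 ^ n * a j \<le> a (j + int n)" for n
  proof (induction n)
    case 0 show ?case by simp
  next
    case (Suc n)
    show ?case
    proof
      fix j
      have "2 ^ Suc n * a j = 2 * (2 ^ n * a j)" by simp
      also have "\<dots> \<le> 2 * a (j + int n)" using Suc.IH by simp
      also have "\<dots> \<le> a (j + int n + 1)" using assms(1) unfolding strongly_inc_def by blast
      finally show "2 ^ Suc n * a j \<le> a (j + int (Suc n))" by (simp add: ac_simps)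
    qed
  qed
  then have "2 ^ nat (j' - j) * a j \<le> a (j + int (nat (j' - j)))" by blast
  then show ?thesis using assms(2) by simp
qed

lemma sdec_pow: assumes "strongly_dec a" "j \<le> j'" shows "2 ^ nat (j' - j) * a j' \<le> a j"
proof -
  have "\<forall>j. 2 ^ n * a (j + int n) \<le> a j" for n
  proof (induction n)
    case 0 show ?case by simp
  next
    case (Suc n)
    show ?case
    proof
      fix j
      have "2 ^ Suc n * a (j + int (Suc n)) = 2 ^ n * (2 * a (j + int n + 1))" by (simp add: ac_simps)
      also have "\<dots> \<le> 2 ^ n * a (j + int n)"
        using assms(1) unfolding strongly_dec_def by (intro mult_left_mono) (auto simp: field_simps)
      also have "\<dots> \<le> a j" using Suc.IH by simp
      finally show "2 ^ Suc n * a (j + int (Suc n)) \<le> a j" .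
    qed
  qed
  then have "2 ^ nat (j' - j) * a (j + int (nat (j' - j))) \<le> a j" by blast
  then show ?thesis using assms(2) by simp
qed

lemma sinc_mono: assumes "strongly_inc a" "j \<le> j'" shows "a j \<le> a j'"
proof -
  have "1 * a j \<le> 2 ^ nat (j' - j) * a j"
    using sinc_pos[OF assms(1), of j] by (intro mult_right_mono) auto
  then show ?thesis using sinc_pow[OF assms] by simp
qed

lemma sinc_less: assumes "strongly_inc a" "j < j'" shows "a j < a j'"
proof -
  have "a j < 2 * a j" using sinc_pos[OF assms(1), of j] by simp
  also have "\<dots> \<le> a (j + 1)" using assms(1) unfolding strongly_inc_def by blast
  also have "\<dots> \<le> a j'" using assms by (intro sinc_mono) auto
  finally show ?thesis .
qed

lemma sinc_bdd_above: assumes "strongly_inc a" shows "\<exists>U. \<forall>j. a j \<le> T \<longrightarrow> j \<le> U"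
proof -
  have a0: "0 < a 0" using sinc_pos[OF assms] .
  obtain n :: nat where n: "T / a 0 < 2 ^ n" using real_arch_pow[of 2 "T / a 0"] by auto
  have "j \<le> int n" if "a j \<le> T" for j
  proof (rule ccontr)
    assume "\<not> j \<le> int n"
    then have "2 ^ nat (j - 0) * a 0 \<le> a j" by (intro sinc_pow[OF assms]) auto
    have "2 ^ n \<le> (2::real) ^ nat j" using \<open>\<not> j \<le> int n\<close> by (intro power_increasing) auto
    then have "2 ^ n * a 0 \<le> 2 ^ nat j * a 0" using a0 by (intro mult_right_mono) auto
    also have "\<dots> \<le> a j" using \<open>2 ^ nat (j - 0) * a 0 \<le> a j\<close> by simp
    finally have "2 ^ n * a 0 \<le> T" using that by simp
    then show False using n a0 by (simp add: field_simps)
  qed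
  then show ?thesis by blast
qed

lemma sinc_bdd_below: assumes "strongly_inc a" "0 < T" shows "\<exists>L. \<forall>j. T \<le> a j \<longrightarrow> L \<le> j"
proof -
  have a0: "0 < a 0" using sinc_pos[OF assms(1)] .
  obtain n :: nat where n: "a 0 / T < 2 ^ n" using real_arch_pow[of 2 "a 0 / T"] by auto
  have "- int n \<le> j" if "T \<le> a j" for j
  proof (rule ccontr)
    assume "\<not> - int n \<le> j"
    then have "2 ^ nat (0 - j) * a j \<le> a 0" by (intro sinc_pow[OF assms(1)]) auto
    have "2 ^ n \<le> (2::real) ^ nat (0 - j)" using \<open>\<not> - int n \<le> j\<close> by (intro power_increasing) auto
    then have "2 ^ n * T \<le> 2 ^ nat (0 - j) * a j" using that assms(2) by (intro mult_mono) auto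
    also have "\<dots> \<le> a 0" by fact
    finally have "2 ^ n * T \<le> a 0" .
    then show False using n assms(2) by (simp add: field_simps)
  qed
  then show ?thesis by blast
qed

lemma cell_ex: assumes "strongly_inc a" "0 < t" shows "\<exists>j. a j \<le> t \<and> t < a (j + 1)"
proof -
  obtain U where U: "\<And>j. a j \<le> t \<Longrightarrow> j \<le> U" using sinc_bdd_above[OF assms(1)] by blast
  obtain L where L: "\<And>j. t \<le> a j \<Longrightarrow> L \<le> j" using sinc_bdd_below[OF assms] by blast
  have aL: "a (L - 1) \<le> t" using L[of "L - 1"] by force
  define A where "A = {j. a j \<le> t} \<inter> {L - 1..U}"
  have fin: "finite A" unfolding A_def by simp
  have ne: "A \<noteq> {}" unfolding A_def using aL U[OF aL] by auto
  define j where "j = Max A"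
  have jA: "j \<in> A" unfolding j_def using fin ne by (rule Max_in)
  have "t < a (j + 1)"
  proof (rule ccontr)
    assume "\<not> t < a (j + 1)"
    then have "j + 1 \<in> A" using jA U[of "j + 1"] unfolding A_def by auto
    then have "j + 1 \<le> j" unfolding j_def using Max_ge[OF fin] by blast
    then show False by simp
  qed
  then show ?thesis using jA unfolding A_def by auto
qed

definition cell :: "(int \<Rightarrow> real) \<Rightarrow> real \<Rightarrow> int" where
  "cell a t = (THE j. a j \<le> t \<and> t < a (j + 1))"

lemma cell_unique: assumes "strongly_inc a" "a j \<le> t" "t < a (j + 1)" "a j' \<le> t" "t < a (j' + 1)"
  shows "j = j'"
proof (rule ccontr)
  assume "j \<noteq> j'"
  then consider "j < j'" | "j' < j" by linarith
  then show False
  proof cases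
    case 1 then have "a (j + 1) \<le> a j'" using assms(1) by (intro sinc_mono) auto
    then show False using assms by simp
  next
    case 2 then have "a (j' + 1) \<le> a j" using assms(1) by (intro sinc_mono) auto
    then show False using assms by simp
  qed
qed

lemma cell_prop: assumes "strongly_inc a" "0 < t"
  shows "a (cell a t) \<le> t" "t < a (cell a t + 1)"
proof -
  have "\<exists>!j. a j \<le> t \<and> t < a (j + 1)"
    using cell_ex[OF assms] cell_unique[OF assms(1)] by blast
  then have "a (cell a t) \<le> t \<and> t < a (cell a t + 1)"
    unfolding cell_def by (rule theI')
  then show "a (cell a t) \<le> t" "t < a (cell a t + 1)" by auto
qed

lemma cell_eq: assumes "strongly_inc a" "a j \<le> t" "t < a (j + 1)" shows "cell a t = j"
proof -
  have t: "0 < t" using assms sinc_pos[OF assms(1), of j] by linarith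
  show ?thesis using cell_prop[OF assms(1) t] assms cell_unique[OF assms(1)] by blast
qed

lemma qc_pos: "qconcave \<psi> \<Longrightarrow> 0 < t \<Longrightarrow> 0 < \<psi> t"
  by (simp add: qconcave_def)

lemma qc_mono: "qconcave \<psi> \<Longrightarrow> 0 < t \<Longrightarrow> t \<le> t' \<Longrightarrow> \<psi> t \<le> \<psi> t'"
  unfolding qconcave_def by (auto simp: mono_on_def)

lemma qc_anti: assumes "qconcave \<psi>" "0 < t" "t \<le> t'" shows "\<psi> t' / t' \<le> \<psi> t / t"
proof -
  have "antimono_on {0<..} (\<lambda>t. \<psi> t / t)" using assms(1) by (simp add: qconcave_def)
  from monotone_onD[OF this, of t t'] assms(2,3) show ?thesis by simp
qed

lemma qc_anti': assumes "qconcave \<psi>" "0 < t" "t \<le> t'" shows "t / \<psi> t \<le> t' / \<psi> t'"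
proof -
  have "\<psi> t' / t' \<le> \<psi> t / t" using qc_anti[OF assms] .
  moreover have "0 < \<psi> t" "0 < \<psi> t'" using assms qc_pos by auto
  ultimately show ?thesis using assms by (simp add: field_simps)
qed

lemma qc_min: assumes "qconcave \<psi>" "0 < s" "0 < t" shows "min 1 (s / t) * \<psi> t \<le> \<psi> s"
proof (cases "t \<le> s")
  case True
  then have "min 1 (s / t) = 1" using assms by (simp add: min_def field_simps)
  then show ?thesis using qc_mono[OF assms(1) assms(3) True] by simp
next
  case False
  then have "\<psi> t / t \<le> \<psi> s / s" using qc_anti[OF assms(1) assms(2)] by simp
  then have "s / t * \<psi> t \<le> \<psi> s" using assms by (simp add: field_simps)
  then show ?thesis using False assms by (simp add: min_def)
qed

lemma disc_typ: assumes "discretizing \<sigma> \<psi>"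
  shows "\<exists>typ. \<forall>k. (typ k \<longrightarrow> \<psi> (\<sigma> (k+1)) \<le> 2 * \<psi> (\<sigma> k)) \<and>
                 (\<not> typ k \<longrightarrow> \<psi> (\<sigma> k) / \<sigma> k \<le> 2 * (\<psi> (\<sigma> (k+1)) / \<sigma> (k+1)))"
proof -
  obtain Z1 Z2 where Z: "Z1 \<union> Z2 = UNIV" "\<forall>k\<in>Z1. \<psi> (\<sigma> (k+1)) \<le> 2 * \<psi> (\<sigma> k)"
    "\<forall>k\<in>Z2. \<psi> (\<sigma> k) / \<sigma> k \<le> 2 * (\<psi> (\<sigma> (k+1)) / \<sigma> (k+1))"
    using assms unfolding discretizing_def by blast
  show ?thesis
    by (rule exI[of _ "\<lambda>k. k \<in> Z1"]) (use Z in blast)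
qed

lemma cell_flat1:
  assumes "qconcave \<psi>" "strongly_inc \<sigma>" "\<psi> (\<sigma> (c+1)) \<le> 2 * \<psi> (\<sigma> c)"
    "\<sigma> c \<le> t" "\<sigma> c \<le> t'" "t' < \<sigma> (c + 1)"
  shows "\<psi> t' \<le> 2 * \<psi> t"
proof -
  have s0: "0 < \<sigma> c" using sinc_pos[OF assms(2)] .
  have t': "0 < t'" using s0 assms(5) by linarith
  have "\<psi> t' \<le> \<psi> (\<sigma> (c+1))" using qc_mono[OF assms(1) t'] assms(6) by simp
  also have "\<dots> \<le> 2 * \<psi> (\<sigma> c)" by fact
  also have "\<psi> (\<sigma> c) \<le> \<psi> t" using qc_mono[OF assms(1) s0 assms(4)] .
  finally show ?thesis by simp
qed

lemma cell_flat2: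
  assumes "qconcave \<psi>" "strongly_inc \<sigma>" "\<psi> (\<sigma> c) / \<sigma> c \<le> 2 * (\<psi> (\<sigma> (c+1)) / \<sigma> (c+1))"
    "\<sigma> c \<le> t" "\<sigma> c \<le> t'" "t' < \<sigma> (c + 1)"
  shows "\<psi> t / t \<le> 2 * (\<psi> t' / t')"
proof -
  have s0: "0 < \<sigma> c" using sinc_pos[OF assms(2)] .
  have t': "0 < t'" using s0 assms(5) by linarith
  have "\<psi> t / t \<le> \<psi> (\<sigma> c) / \<sigma> c" using qc_anti[OF assms(1) s0 assms(4)] .
  also have "\<dots> \<le> 2 * (\<psi> (\<sigma> (c+1)) / \<sigma> (c+1))" by fact
  also have "\<psi> (\<sigma> (c+1)) / \<sigma> (c+1) \<le> \<psi> t' / t'" using qc_anti[OF assms(1) t'] assms(6) by simp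
  finally show ?thesis by simp
qed

definition rr :: real where "rr = sqrt (1/2)"
definition gc :: real where "gc = 1 / (1 - rr)"

lemma rr_bounds: "0 \<le> rr" "rr < 1"
proof -
  show "0 \<le> rr" unfolding rr_def by simp
  have "sqrt (1/2) < sqrt 1" by (rule real_sqrt_less_mono) simp
  then show "rr < 1" unfolding rr_def by simp
qed

lemma gc_pos: "0 < gc"
  unfolding gc_def using rr_bounds by simp

lemma sqrt_geo: fixes X Y :: real assumes "0 \<le> Y" "2 ^ d * Y \<le> X" shows "sqrt Y \<le> sqrt X * rr ^ d"
proof -
  have "Y \<le> X * (1/2) ^ d" using assms by (simp add: field_simps power_one_over)
  then have "sqrt Y \<le> sqrt (X * (1/2) ^ d)" by (rule real_sqrt_le_mono)
  also have "\<dots> = sqrt X * rr ^ d" by (simp add: real_sqrt_mult real_sqrt_power rr_def)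
  finally show ?thesis .
qed

lemma zsum_split: "zsum f = zsum (\<lambda>k. if P k then f k else 0) + zsum (\<lambda>k. if P k then 0 else f k)"
  by (subst zsum_add[symmetric]) (auto intro!: arg_cong[where f=zsum])

definition typ_ok :: "(int \<Rightarrow> real) \<Rightarrow> (real \<Rightarrow> real) \<Rightarrow> (int \<Rightarrow> bool) \<Rightarrow> bool" where
  "typ_ok \<sigma> \<psi> typ \<longleftrightarrow> (\<forall>k. (typ k \<longrightarrow> \<psi> (\<sigma> (k+1)) \<le> 2 * \<psi> (\<sigma> k)) \<and>
                 (\<not> typ k \<longrightarrow> \<psi> (\<sigma> k) / \<sigma> k \<le> 2 * (\<psi> (\<sigma> (k+1)) / \<sigma> (k+1))))"

lemma typ_ex: "discretizing \<sigma> \<psi> \<Longrightarrow> \<exists>typ. typ_ok \<sigma> \<psi> typ"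
  unfolding typ_ok_def by (rule disc_typ)

lemma gsum_up:
  assumes psi: "qconcave \<psi>" and sig: "strongly_inc \<sigma>" and ps: "strongly_inc (\<lambda>j. \<psi> (\<sigma> j))" and t: "0 < t"
  shows "zsum (\<lambda>j. if t \<le> \<sigma> j then ennreal (1 / sqrt (\<psi> (\<sigma> j))) else 0) \<le> ennreal (gc / sqrt (\<psi> t))"
proof -
  obtain L where L: "\<And>j. t \<le> \<sigma> j \<Longrightarrow> L \<le> j" using sinc_bdd_below[OF sig t] by blast
  have pt: "0 < \<psi> t" using qc_pos[OF psi t] .
  have ge: "\<psi> t \<le> \<psi> (\<sigma> j)" if "t \<le> \<sigma> j" for j using qc_mono[OF psi t that] .
  have "zsum (\<lambda>j. if j \<in> {j. t \<le> \<sigma> j} then ennreal (1 / sqrt (\<psi> (\<sigma> j))) else 0)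
        \<le> ennreal ((1 / sqrt (\<psi> t)) / (1 - rr))"
  proof (rule geo_fwd[OF rr_bounds, where L=L])
    show "0 \<le> 1 / sqrt (\<psi> t)" using pt by simp
  next
    fix k assume "k \<in> {j. t \<le> \<sigma> j}" then show "L \<le> k" using L by auto
  next
    fix k assume "k \<in> {j. t \<le> \<sigma> j}"
    then have "\<psi> t \<le> \<psi> (\<sigma> k)" using ge by auto
    then show "1 / sqrt (\<psi> (\<sigma> k)) \<le> 1 / sqrt (\<psi> t)"
      using pt by (intro divide_left_mono real_sqrt_le_mono) auto
  next
    fix k k' assume kk: "k \<in> {j. t \<le> \<sigma> j}" "k' \<in> {j. t \<le> \<sigma> j}" "k < k'"
    have "2 ^ nat (k' - k) * \<psi> (\<sigma> k) \<le> \<psi> (\<sigma> k')" using sinc_pow[OF ps, of k k'] kk by simp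
    moreover have "\<psi> t \<le> \<psi> (\<sigma> k)" using ge kk by auto
    then have "2 ^ nat (k' - k) * \<psi> t \<le> 2 ^ nat (k' - k) * \<psi> (\<sigma> k)" by (intro mult_left_mono) auto
    ultimately have "2 ^ nat (k' - k) * \<psi> t \<le> \<psi> (\<sigma> k')" by linarith
    moreover have "0 < \<psi> (\<sigma> k')" using pt ge[of k'] kk by force
    ultimately have "2 ^ nat (k' - k) * (1 / \<psi> (\<sigma> k')) \<le> 1 / \<psi> t"
      using pt by (simp add: field_simps)
    then have "sqrt (1 / \<psi> (\<sigma> k')) \<le> sqrt (1 / \<psi> t) * rr ^ nat (k' - k)"
      using pt ge[of k'] kk by (intro sqrt_geo) force+
    then show "1 / sqrt (\<psi> (\<sigma> k')) \<le> 1 / sqrt (\<psi> t) * rr ^ nat (k' - k)"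
      by (simp add: real_sqrt_divide)
  qed
  also have "(1 / sqrt (\<psi> t)) / (1 - rr) = gc / sqrt (\<psi> t)" by (simp add: gc_def)
  finally show ?thesis by simp
qed

lemma gsum_down:
  assumes psi: "qconcave \<psi>" and sig: "strongly_inc \<sigma>" and ps: "strongly_dec (\<lambda>j. \<psi> (\<sigma> j) / \<sigma> j)" and t: "0 < t"
  shows "zsum (\<lambda>j. if \<sigma> j \<le> t then ennreal (sqrt (\<sigma> j / \<psi> (\<sigma> j))) else 0) \<le> ennreal (gc * sqrt (t / \<psi> t))"
proof -
  obtain U where U: "\<And>j. \<sigma> j \<le> t \<Longrightarrow> j \<le> U" using sinc_bdd_above[OF sig] by blast
  have pt: "0 < \<psi> t" using qc_pos[OF psi t] .
  have sp: "0 < \<sigma> j" for j using sinc_pos[OF sig] .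
  have pp: "0 < \<psi> (\<sigma> j)" for j using qc_pos[OF psi sp] .
  have le: "\<sigma> j / \<psi> (\<sigma> j) \<le> t / \<psi> t" if "\<sigma> j \<le> t" for j using qc_anti'[OF psi sp that] .
  have "zsum (\<lambda>j. if j \<in> {j. \<sigma> j \<le> t} then ennreal (sqrt (\<sigma> j / \<psi> (\<sigma> j))) else 0)
        \<le> ennreal (sqrt (t / \<psi> t) / (1 - rr))"
  proof (rule geo_bwd[OF rr_bounds, where U=U])
    show "0 \<le> sqrt (t / \<psi> t)" using pt t by simp
  next
    fix k assume "k \<in> {j. \<sigma> j \<le> t}" then show "k \<le> U" using U by auto
  next
    fix k assume "k \<in> {j. \<sigma> j \<le> t}"
    then show "sqrt (\<sigma> k / \<psi> (\<sigma> k)) \<le> sqrt (t / \<psi> t)" using le by (auto intro: real_sqrt_le_mono)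
  next
    fix k k' assume kk: "k \<in> {j. \<sigma> j \<le> t}" "k' \<in> {j. \<sigma> j \<le> t}" "k < k'"
    have "2 ^ nat (k' - k) * (\<psi> (\<sigma> k') / \<sigma> k') \<le> \<psi> (\<sigma> k) / \<sigma> k" using sdec_pow[OF ps, of k k'] kk by simp
    then have "2 ^ nat (k' - k) * (\<sigma> k / \<psi> (\<sigma> k)) \<le> \<sigma> k' / \<psi> (\<sigma> k')"
      using sp[of k] sp[of k'] pp[of k] pp[of k'] by (simp add: field_simps)
    also have "\<dots> \<le> t / \<psi> t" using le kk by auto
    finally have "sqrt (\<sigma> k / \<psi> (\<sigma> k)) \<le> sqrt (t / \<psi> t) * rr ^ nat (k' - k)"
      using sp[of k] pp[of k] by (intro sqrt_geo) auto
    then show "sqrt (\<sigma> k / \<psi> (\<sigma> k)) \<le> sqrt (t / \<psi> t) * rr ^ nat (k' - k)" .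
  qed
  also have "sqrt (t / \<psi> t) / (1 - rr) = gc * sqrt (t / \<psi> t)" by (simp add: gc_def)
  finally show ?thesis by simp
qed

lemma colsum:
  assumes psi: "qconcave \<psi>" and d: "discretizing \<sigma> \<psi>" and t: "0 < t"
  shows "zsum (\<lambda>j. ennreal (sqrt (min 1 (\<sigma> j / t) / \<psi> (\<sigma> j)))) \<le> ennreal (2 * gc / sqrt (\<psi> t))"
proof -
  have sig: "strongly_inc \<sigma>" and ps: "strongly_inc (\<lambda>j. \<psi> (\<sigma> j))"
    and pd: "strongly_dec (\<lambda>j. \<psi> (\<sigma> j) / \<sigma> j)" using d by (auto simp: discretizing_def)
  have pt: "0 < \<psi> t" using qc_pos[OF psi t] .
  have sp: "0 < \<sigma> j" for j using sinc_pos[OF sig] .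
  let ?f = "\<lambda>j. ennreal (sqrt (min 1 (\<sigma> j / t) / \<psi> (\<sigma> j)))"
  have "zsum (\<lambda>j. if \<sigma> j \<le> t then ?f j else 0)
      = zsum (\<lambda>j. ennreal (1 / sqrt t) * (if \<sigma> j \<le> t then ennreal (sqrt (\<sigma> j / \<psi> (\<sigma> j))) else 0))"
  proof (rule arg_cong[where f=zsum], rule ext)
    fix j
    show "(if \<sigma> j \<le> t then ?f j else 0)
      = ennreal (1 / sqrt t) * (if \<sigma> j \<le> t then ennreal (sqrt (\<sigma> j / \<psi> (\<sigma> j))) else 0)"
    proof (cases "\<sigma> j \<le> t")
      case True
      then have "min 1 (\<sigma> j / t) = \<sigma> j / t" using t by (simp add: min_def field_simps)
      then show ?thesis using True t sp[of j] qc_pos[OF psi sp[of j]]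
        by (simp add: ennreal_mult'[symmetric] real_sqrt_divide real_sqrt_mult)
    qed simp
  qed
  also have "\<dots> = ennreal (1 / sqrt t) * zsum (\<lambda>j. if \<sigma> j \<le> t then ennreal (sqrt (\<sigma> j / \<psi> (\<sigma> j))) else 0)"
    by (rule zsum_cmult)
  also have "\<dots> \<le> ennreal (1 / sqrt t) * ennreal (gc * sqrt (t / \<psi> t))"
    by (intro mult_left_mono gsum_down[OF psi sig pd t]) auto
  also have "\<dots> = ennreal (gc / sqrt (\<psi> t))"
    using t pt gc_pos by (simp add: ennreal_mult'[symmetric] real_sqrt_divide)
  finally have A: "zsum (\<lambda>j. if \<sigma> j \<le> t then ?f j else 0) \<le> ennreal (gc / sqrt (\<psi> t))" .
  have "zsum (\<lambda>j. if \<sigma> j \<le> t then 0 else ?f j)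
      \<le> zsum (\<lambda>j. if t \<le> \<sigma> j then ennreal (1 / sqrt (\<psi> (\<sigma> j))) else 0)"
  proof (rule zsum_mono)
    fix j
    show "(if \<sigma> j \<le> t then 0 else ?f j) \<le> (if t \<le> \<sigma> j then ennreal (1 / sqrt (\<psi> (\<sigma> j))) else 0)"
    proof (cases "\<sigma> j \<le> t")
      case False
      then have "min 1 (\<sigma> j / t) = 1" using t by (simp add: min_def field_simps)
      then show ?thesis using False by (simp add: real_sqrt_divide)
    qed simp
  qed
  also have "\<dots> \<le> ennreal (gc / sqrt (\<psi> t))" by (rule gsum_up[OF psi sig ps t])
  finally have B: "zsum (\<lambda>j. if \<sigma> j \<le> t then 0 else ?f j) \<le> ennreal (gc / sqrt (\<psi> t))" .
  have "zsum ?f = zsum (\<lambda>j. if \<sigma> j \<le> t then ?f j else 0) + zsum (\<lambda>j. if \<sigma> j \<le> t then 0 else ?f j)"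
    by (rule zsum_split)
  also have "\<dots> \<le> ennreal (gc / sqrt (\<psi> t)) + ennreal (gc / sqrt (\<psi> t))"
    by (rule add_mono[OF A B])
  also have "\<dots> = ennreal (2 * gc / sqrt (\<psi> t))"
    using gc_pos pt by (simp add: ennreal_plus[symmetric] del: ennreal_plus)
  finally show ?thesis .
qed

definition jsel :: "(int \<Rightarrow> real) \<Rightarrow> (int \<Rightarrow> bool) \<Rightarrow> real \<Rightarrow> int" where
  "jsel \<sigma> typ t = cell \<sigma> t + (if typ (cell \<sigma> t) then 1 else 0)"

lemma jsel_prop:
  assumes psi: "qconcave \<psi>" and sig: "strongly_inc \<sigma>" and ty: "typ_ok \<sigma> \<psi> typ" and t: "0 < t"
  shows "1 / (2 * \<psi> t) \<le> min 1 (\<sigma> (jsel \<sigma> typ t) / t) / \<psi> (\<sigma> (jsel \<sigma> typ t))"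
proof -
  define c where "c = cell \<sigma> t"
  have c: "\<sigma> c \<le> t" "t < \<sigma> (c + 1)" using cell_prop[OF sig t] unfolding c_def by auto
  have pt: "0 < \<psi> t" using qc_pos[OF psi t] .
  have sp: "0 < \<sigma> j" for j using sinc_pos[OF sig] .
  have pp: "0 < \<psi> (\<sigma> j)" for j using qc_pos[OF psi sp] .
  show ?thesis
  proof (cases "typ c")
    case True
    then have j: "jsel \<sigma> typ t = c + 1" unfolding jsel_def c_def by simp
    have "\<psi> (\<sigma> (c+1)) \<le> 2 * \<psi> (\<sigma> c)" using ty True unfolding typ_ok_def by blast
    also have "\<psi> (\<sigma> c) \<le> \<psi> t" using qc_mono[OF psi sp c(1)] .
    finally have "\<psi> (\<sigma> (c+1)) \<le> 2 * \<psi> t" by simp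
    moreover have "min 1 (\<sigma> (c + 1) / t) = 1" using c t by (simp add: min_def field_simps)
    ultimately show ?thesis unfolding j using pt pp[of "c+1"] by (simp add: field_simps)
  next
    case False
    then have j: "jsel \<sigma> typ t = c" unfolding jsel_def c_def by simp
    have "\<psi> (\<sigma> c) / \<sigma> c \<le> 2 * (\<psi> (\<sigma> (c+1)) / \<sigma> (c+1))" using ty False unfolding typ_ok_def by blast
    also have "\<psi> (\<sigma> (c+1)) / \<sigma> (c+1) \<le> \<psi> t / t" using qc_anti[OF psi t] c(2) by simp
    finally have *: "\<psi> (\<sigma> c) / \<sigma> c \<le> 2 * (\<psi> t / t)" by simp
    have "min 1 (\<sigma> c / t) = \<sigma> c / t" using c t by (simp add: min_def field_simps)
    moreover have "1 / (2 * \<psi> t) \<le> \<sigma> c / t / \<psi> (\<sigma> c)"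
      using * pt t sp[of c] pp[of c] by (simp add: field_simps)
    ultimately show ?thesis unfolding j by simp
  qed
qed

lemma Kfun_le: assumes "\<forall>i. x i = x0 i + x1 i"
  shows "Kfun N0 N1 t x \<le> N0 x0 + ennreal t * N1 x1"
  unfolding Kfun_def by (rule INF_lower2[of "(x0, x1)"]) (use assms in auto)

lemma Kfun_ge: assumes "\<And>x0 x1. \<forall>i. x i = x0 i + x1 i \<Longrightarrow> c \<le> N0 x0 + ennreal t * N1 x1"
  shows "c \<le> Kfun N0 N1 t x"
  unfolding Kfun_def by (rule INF_greatest) (use assms in auto)

lemma Kb_ge:
  assumes q: "1 \<le> q" and t: "0 < t" and tk: "0 < tt k"
  shows "ennreal (min 1 (t / tt k) * \<bar>y k\<bar>) \<le> Kfun (lqw q (\<lambda>_. 1)) (lqw q (\<lambda>k. 1 / tt k)) t y"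
proof (rule Kfun_ge)
  fix x0 x1 assume dec: "\<forall>i. y i = x0 i + x1 i"
  have m1: "min 1 (t / tt k) \<le> 1" and m2: "min 1 (t / tt k) \<le> t / tt k" and m0: "0 \<le> min 1 (t / tt k)"
    using t tk by auto
  have "min 1 (t / tt k) * \<bar>y k\<bar> \<le> min 1 (t / tt k) * (\<bar>x0 k\<bar> + \<bar>x1 k\<bar>)"
    using dec m0 by (intro mult_left_mono) (auto simp: abs_triangle_ineq)
  also have "\<dots> = min 1 (t / tt k) * \<bar>x0 k\<bar> + min 1 (t / tt k) * \<bar>x1 k\<bar>" by (simp add: algebra_simps)
  also have "\<dots> \<le> \<bar>x0 k\<bar> + t / tt k * \<bar>x1 k\<bar>"
  proof (rule add_mono)
    show "min 1 (t / tt k) * \<bar>x0 k\<bar> \<le> \<bar>x0 k\<bar>" using m1 mult_right_mono[OF m1, of "\<bar>x0 k\<bar>"] by simp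
    show "min 1 (t / tt k) * \<bar>x1 k\<bar> \<le> t / tt k * \<bar>x1 k\<bar>" using mult_right_mono[OF m2, of "\<bar>x1 k\<bar>"] by simp
  qed
  finally have r: "min 1 (t / tt k) * \<bar>y k\<bar> \<le> \<bar>x0 k\<bar> + t * \<bar>x1 k * (1 / tt k)\<bar>"
    using tk by (simp add: abs_mult)
  have "ennreal (min 1 (t / tt k) * \<bar>y k\<bar>) \<le> ennreal (\<bar>x0 k\<bar> + t * \<bar>x1 k * (1 / tt k)\<bar>)"
    using r by (rule ennreal_leI)
  also have "\<dots> = ennreal \<bar>x0 k * 1\<bar> + ennreal t * ennreal \<bar>x1 k * (1 / tt k)\<bar>"
    using t by (simp add: ennreal_mult'[symmetric] del: ennreal_plus) (simp add: ennreal_plus[symmetric] del: ennreal_plus)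
  also have "\<dots> \<le> lqw q (\<lambda>_. 1) x0 + ennreal t * lqw q (\<lambda>k. 1 / tt k) x1"
    unfolding lqw_def using q
    by (intro add_mono mult_left_mono lp_ge[where b="\<lambda>i. ennreal \<bar>x0 i * 1\<bar>"]
        lp_ge[where b="\<lambda>i. ennreal \<bar>x1 i * (1 / tt i)\<bar>"]) auto
  finally show "ennreal (min 1 (t / tt k) * \<bar>y k\<bar>) \<le> lqw q (\<lambda>_. 1) x0 + ennreal t * lqw q (\<lambda>k. 1 / tt k) x1" .
qed

lemma Kb_le:
  assumes q: "1 \<le> q" and t: "0 < t" and tk: "\<And>k. 0 < tt k"
  shows "Kfun (lqw q (\<lambda>_. 1)) (lqw q (\<lambda>k. 1 / tt k)) t y \<le> zsum (\<lambda>k. ennreal (min 1 (t / tt k) * \<bar>y k\<bar>))"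
proof -
  define y0 where "y0 k = (if tt k \<le> t then y k else 0)" for k
  define y1 where "y1 k = (if tt k \<le> t then 0 else y k)" for k
  have dec: "\<forall>i. y i = y0 i + y1 i" by (simp add: y0_def y1_def)
  have "Kfun (lqw q (\<lambda>_. 1)) (lqw q (\<lambda>k. 1 / tt k)) t y \<le> lqw q (\<lambda>_. 1) y0 + ennreal t * lqw q (\<lambda>k. 1 / tt k) y1"
    by (rule Kfun_le[OF dec])
  also have "\<dots> \<le> zsum (\<lambda>k. ennreal \<bar>y0 k * 1\<bar>) + ennreal t * zsum (\<lambda>k. ennreal \<bar>y1 k * (1 / tt k)\<bar>)"
    unfolding lqw_def using q by (intro add_mono mult_left_mono lp_le_zsum) auto
  also have "\<dots> = zsum (\<lambda>k. ennreal \<bar>y0 k * 1\<bar> + ennreal t * ennreal \<bar>y1 k * (1 / tt k)\<bar>)"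
    by (simp add: zsum_add zsum_cmult)
  also have "\<dots> = zsum (\<lambda>k. ennreal (min 1 (t / tt k) * \<bar>y k\<bar>))"
  proof (rule arg_cong[where f=zsum], rule ext)
    fix k
    show "ennreal \<bar>y0 k * 1\<bar> + ennreal t * ennreal \<bar>y1 k * (1 / tt k)\<bar> = ennreal (min 1 (t / tt k) * \<bar>y k\<bar>)"
    proof (cases "tt k \<le> t")
      case True
      then have "min 1 (t / tt k) = 1" using tk[of k] by (simp add: min_def field_simps)
      then show ?thesis using True by (simp add: y0_def y1_def)
    next
      case False
      then have "min 1 (t / tt k) = t / tt k" using tk[of k] by (simp add: min_def field_simps)
      then show ?thesis using False t tk[of k]
        by (simp add: y0_def y1_def ennreal_mult'[symmetric] abs_mult)
    qed
  qed
  finally show ?thesis .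
qed

lemma powr_le_self': fixes x r :: real assumes "0 \<le> x" "x \<le> 1" "1 \<le> r" shows "x powr r \<le> x"
  using assms by (metis powr_one powr_mono')

lemma SR:
  fixes \<theta> b :: "int \<Rightarrow> real" and P R :: real
  assumes P: "1 \<le> P" and th: "\<And>k. 0 \<le> \<theta> k" "\<And>k. \<theta> k \<le> 1"
    and R: "zsum (\<lambda>k. ennreal (\<theta> k)) \<le> ennreal R" "0 \<le> R" and b: "\<And>k. 0 \<le> b k"
  shows "enn_pow P (zsum (\<lambda>k. ennreal (\<theta> k ^ 2 * b k)))
          \<le> ennreal (R powr P) * zsum (\<lambda>k. ennreal (\<theta> k) * enn_pow P (ennreal (b k)))"
proof -
  define S where "S = (SUP k. ennreal (\<theta> k * b k))"
  define T where "T = enn_pow (1/P) (zsum (\<lambda>k. enn_pow P (ennreal (\<theta> k * b k))))"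
  have "zsum (\<lambda>k. ennreal (\<theta> k ^ 2 * b k)) \<le> zsum (\<lambda>k. ennreal (\<theta> k) * S)"
  proof (rule zsum_mono)
    fix k
    have "ennreal (\<theta> k ^ 2 * b k) = ennreal (\<theta> k) * ennreal (\<theta> k * b k)"
      using th[of k] b[of k] by (simp add: ennreal_mult'[symmetric] power2_eq_square mult.assoc)
    also have "\<dots> \<le> ennreal (\<theta> k) * S" unfolding S_def by (intro mult_left_mono SUP_upper) auto
    finally show "ennreal (\<theta> k ^ 2 * b k) \<le> ennreal (\<theta> k) * S" .
  qed
  also have "\<dots> = zsum (\<lambda>k. ennreal (\<theta> k)) * S" using zsum_cmult[of S "\<lambda>k. ennreal (\<theta> k)"] by (simp add: mult.commute)
  also have "\<dots> \<le> ennreal R * S" using R by (intro mult_right_mono) auto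
  also have "S \<le> T"
    unfolding S_def
  proof (rule SUP_least)
    fix k
    have "ennreal (\<theta> k * b k) = enn_pow (1/P) (enn_pow P (ennreal (\<theta> k * b k)))"
      using P by (simp add: ep_inv1)
    also have "\<dots> \<le> T" unfolding T_def using P by (intro ep_mono zsum_ge) auto
    finally show "ennreal (\<theta> k * b k) \<le> T" .
  qed
  finally have "zsum (\<lambda>k. ennreal (\<theta> k ^ 2 * b k)) \<le> ennreal R * T" by (simp add: mult_left_mono)
  then have "enn_pow P (zsum (\<lambda>k. ennreal (\<theta> k ^ 2 * b k))) \<le> enn_pow P (ennreal R * T)"
    using P by (intro ep_mono) auto
  also have "\<dots> = ennreal (R powr P) * zsum (\<lambda>k. enn_pow P (ennreal (\<theta> k * b k)))"
    using P R by (simp add: ep_mult ep_ennreal T_def ep_inv2)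
  also have "\<dots> \<le> ennreal (R powr P) * zsum (\<lambda>k. ennreal (\<theta> k) * enn_pow P (ennreal (b k)))"
  proof (intro mult_left_mono zsum_mono)
    fix k
    have "enn_pow P (ennreal (\<theta> k * b k)) = ennreal (\<theta> k powr P * b k powr P)"
      using th[of k] b[of k] by (simp add: ep_ennreal powr_mult)
    also have "\<dots> \<le> ennreal (\<theta> k * b k powr P)"
      using th[of k] b[of k] P by (intro ennreal_leI mult_right_mono powr_le_self') auto
    also have "\<dots> = ennreal (\<theta> k) * enn_pow P (ennreal (b k))"
      using th[of k] b[of k] by (simp add: ep_ennreal ennreal_mult)
    finally show "enn_pow P (ennreal (\<theta> k * b k)) \<le> ennreal (\<theta> k) * enn_pow P (ennreal (b k))" .
  qed simp
  finally show ?thesis .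
qed

lemma rowsum_gen:
  fixes tt r :: "int \<Rightarrow> real" and \<sigma> C :: real
  assumes tt: "strongly_inc tt" and sg: "0 < \<sigma>" and C: "0 < C"
    and inc: "\<And>k k'. k \<le> k' \<Longrightarrow> 2 ^ nat (k' - k) * r k \<le> r k'"
    and dec: "\<And>k k'. k \<le> k' \<Longrightarrow> 2 ^ nat (k' - k) * (r k' / tt k') \<le> r k / tt k"
    and rpos: "\<And>k. 0 < r k"
    and le1: "\<And>k. k \<in> T \<Longrightarrow> min 1 (\<sigma> / tt k) * r k * C \<le> 1"
  shows "zsum (\<lambda>k. if k \<in> T then ennreal (sqrt (min 1 (\<sigma> / tt k) * r k * C)) else 0) \<le> ennreal (2 * gc)"
proof -
  have tp: "0 < tt k" for k using sinc_pos[OF tt] .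
  define w where "w k = sqrt (min 1 (\<sigma> / tt k) * r k * C)" for k
  define GA where "GA = {k. k \<in> T \<and> tt k \<le> \<sigma>}"
  define GB where "GB = {k. k \<in> T \<and> \<not> tt k \<le> \<sigma>}"
  have mA: "min 1 (\<sigma> / tt k) = 1" if "tt k \<le> \<sigma>" for k using that tp[of k] by (simp add: min_def field_simps)
  have mB: "min 1 (\<sigma> / tt k) = \<sigma> / tt k" if "\<not> tt k \<le> \<sigma>" for k using that tp[of k] by (simp add: min_def field_simps)
  have w1: "w k \<le> 1" if "k \<in> T" for k
    unfolding w_def using le1[OF that] by simp
  have "zsum (\<lambda>k. if k \<in> T then ennreal (w k) else 0)
      = zsum (\<lambda>k. (if k \<in> GA then ennreal (w k) else 0) + (if k \<in> GB then ennreal (w k) else 0))"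
    by (rule arg_cong[where f=zsum]) (auto simp: GA_def GB_def)
  also have "\<dots> = zsum (\<lambda>k. if k \<in> GA then ennreal (w k) else 0) + zsum (\<lambda>k. if k \<in> GB then ennreal (w k) else 0)"
    by (rule zsum_add)
  also have "\<dots> \<le> ennreal (1 / (1 - rr)) + ennreal (1 / (1 - rr))"
  proof (rule add_mono)
    obtain U where U: "\<And>k. tt k \<le> \<sigma> \<Longrightarrow> k \<le> U" using sinc_bdd_above[OF tt] by blast
    show "zsum (\<lambda>k. if k \<in> GA then ennreal (w k) else 0) \<le> ennreal (1 / (1 - rr))"
    proof (rule geo_bwd[OF rr_bounds, where U=U])
      fix k assume "k \<in> GA" then show "k \<le> U" using U by (auto simp: GA_def)
    next
      fix k assume "k \<in> GA" then show "w k \<le> 1" using w1 by (auto simp: GA_def)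
    next
      fix k k' assume kk: "k \<in> GA" "k' \<in> GA" "k < k'"
      have "2 ^ nat (k' - k) * (r k * C) \<le> r k' * C"
        using inc[of k k'] kk C by (simp add: mult.assoc[symmetric] mult_right_mono)
      then have "sqrt (r k * C) \<le> sqrt (r k' * C) * rr ^ nat (k' - k)"
        using rpos[of k] C by (intro sqrt_geo) auto
      also have "sqrt (r k' * C) \<le> 1" using w1[of k'] kk mA[of k'] by (simp add: GA_def w_def)
      then have "sqrt (r k' * C) * rr ^ nat (k' - k) \<le> 1 * rr ^ nat (k' - k)"
        using rr_bounds by (intro mult_right_mono) auto
      finally show "w k \<le> 1 * rr ^ nat (k' - k)" using kk mA[of k] by (simp add: GA_def w_def)
    qed simp
  next
    obtain L where L: "\<And>k. \<sigma> \<le> tt k \<Longrightarrow> L \<le> k" using sinc_bdd_below[OF tt sg] by blast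
    show "zsum (\<lambda>k. if k \<in> GB then ennreal (w k) else 0) \<le> ennreal (1 / (1 - rr))"
    proof (rule geo_fwd[OF rr_bounds, where L=L])
      fix k assume "k \<in> GB" then show "L \<le> k" using L by (auto simp: GB_def)
    next
      fix k assume "k \<in> GB" then show "w k \<le> 1" using w1 by (auto simp: GB_def)
    next
      fix k k' assume kk: "k \<in> GB" "k' \<in> GB" "k < k'"
      have "2 ^ nat (k' - k) * (\<sigma> * (r k' / tt k') * C) = \<sigma> * (2 ^ nat (k' - k) * (r k' / tt k')) * C"
        by (simp add: algebra_simps)
      also have "\<dots> \<le> \<sigma> * (r k / tt k) * C"
        using dec[of k k'] kk sg C by (intro mult_right_mono mult_left_mono) auto
      finally have "sqrt (\<sigma> * (r k' / tt k') * C) \<le> sqrt (\<sigma> * (r k / tt k) * C) * rr ^ nat (k' - k)"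
        using rpos[of k'] tp[of k'] sg C by (intro sqrt_geo) auto
      also have "sqrt (\<sigma> * (r k / tt k) * C) \<le> 1" using w1[of k] kk mB[of k] by (simp add: GB_def w_def)
      then have "sqrt (\<sigma> * (r k / tt k) * C) * rr ^ nat (k' - k) \<le> 1 * rr ^ nat (k' - k)"
        using rr_bounds by (intro mult_right_mono) auto
      finally show "w k' \<le> 1 * rr ^ nat (k' - k)" using kk mB[of k'] by (simp add: GB_def w_def)
    qed simp
  qed
  also have "\<dots> = ennreal (2 * gc)" using gc_pos by (simp add: gc_def ennreal_plus[symmetric] del: ennreal_plus)
  finally show ?thesis unfolding w_def .
qed

locale L310 =
  fixes p q :: ennreal and \<phi>0 \<phi>1 \<phi> :: "real \<Rightarrow> real"
    and tt s0 s1 s :: "int \<Rightarrow> real"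
  assumes p: "1 \<le> p" and q: "1 \<le> q"
    and qc0: "qconcave \<phi>0" and qc1: "qconcave \<phi>1" and qc: "qconcave \<phi>"
    and dt: "discretizing tt (fcomp \<phi> \<phi>0 \<phi>1)"
    and d0: "discretizing s0 \<phi>0" and d1: "discretizing s1 \<phi>1" and ds: "discretizing s \<phi>"
begin

definition uu :: "int \<Rightarrow> real" where "uu k = \<phi>1 (tt k) / \<phi>0 (tt k)"
definition rk :: "int \<Rightarrow> real" where "rk k = fcomp \<phi> \<phi>0 \<phi>1 (tt k)"

lemma tt_inc: "strongly_inc tt" using dt by (simp add: discretizing_def)
lemma tt_pos: "0 < tt k" using sinc_pos[OF tt_inc] .
lemma s_inc: "strongly_inc s" using ds by (simp add: discretizing_def)
lemma s_pos: "0 < s k" using sinc_pos[OF s_inc] .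
lemma s0_inc: "strongly_inc s0" using d0 by (simp add: discretizing_def)
lemma s0_pos: "0 < s0 k" using sinc_pos[OF s0_inc] .
lemma s1_inc: "strongly_inc s1" using d1 by (simp add: discretizing_def)
lemma s1_pos: "0 < s1 k" using sinc_pos[OF s1_inc] .
lemma f0_pos: "0 < \<phi>0 (tt k)" using qc_pos[OF qc0 tt_pos] .
lemma f1_pos: "0 < \<phi>1 (tt k)" using qc_pos[OF qc1 tt_pos] .
lemma uu_pos: "0 < uu k" unfolding uu_def using f0_pos f1_pos by simp
lemma fu_pos: "0 < \<phi> (uu k)" using qc_pos[OF qc uu_pos] .
lemma fs_pos: "0 < \<phi> (s m)" using qc_pos[OF qc s_pos] .
lemma fs0_pos: "0 < \<phi>0 (s0 m)" using qc_pos[OF qc0 s0_pos] .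
lemma fs1_pos: "0 < \<phi>1 (s1 m)" using qc_pos[OF qc1 s1_pos] .

lemma rk_eq: "rk k = \<phi>0 (tt k) * \<phi> (uu k)"
  by (simp add: rk_def fcomp_def uu_def)
lemma rk_eq1: "rk k = \<phi>1 (tt k) * (\<phi> (uu k) / uu k)"
  using f0_pos[of k] f1_pos[of k] by (simp add: rk_eq uu_def field_simps)
lemma rk_pos: "0 < rk k" using f0_pos fu_pos by (simp add: rk_eq)

lemma rk_inc: "k \<le> k' \<Longrightarrow> 2 ^ nat (k' - k) * rk k \<le> rk k'"
  unfolding rk_def by (rule sinc_pow) (use dt in \<open>auto simp: discretizing_def\<close>)
lemma rk_dec: "k \<le> k' \<Longrightarrow> 2 ^ nat (k' - k) * (rk k' / tt k') \<le> rk k / tt k"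
  unfolding rk_def by (rule sdec_pow[where a="\<lambda>k. fcomp \<phi> \<phi>0 \<phi>1 (tt k) / tt k"]) (use dt in \<open>auto simp: discretizing_def\<close>)

definition K0 :: "int \<Rightarrow> int \<Rightarrow> int \<Rightarrow> real" where
  "K0 m j k = (if uu k \<le> s m then min 1 (s0 j / tt k) * rk k * (1 / (\<phi>0 (s0 j) * \<phi> (s m))) else 0)"
definition K1 :: "int \<Rightarrow> int \<Rightarrow> int \<Rightarrow> real" where
  "K1 m j k = (if \<not> uu k \<le> s m then min 1 (s1 j / tt k) * rk k * (s m / (\<phi>1 (s1 j) * \<phi> (s m))) else 0)"

lemma K0_nn: "0 \<le> K0 m j k"
  unfolding K0_def using rk_pos[of k] tt_pos[of k] s0_pos[of j] fs0_pos[of j] fs_pos[of m] by simp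

lemma K1_nn: "0 \<le> K1 m j k"
  unfolding K1_def using rk_pos[of k] tt_pos[of k] s1_pos[of j] fs1_pos[of j] fs_pos[of m] s_pos[of m] by simp

lemma K0_le1': assumes "uu k \<le> s m" shows "min 1 (s0 j / tt k) * rk k * (1 / (\<phi>0 (s0 j) * \<phi> (s m))) \<le> 1"
proof -
  have m0: "0 \<le> min 1 (s0 j / tt k)" using s0_pos[of j] tt_pos[of k] by simp
  have "\<phi> (uu k) \<le> \<phi> (s m)" using qc_mono[OF qc uu_pos assms] .
  then have "min 1 (s0 j / tt k) * rk k \<le> min 1 (s0 j / tt k) * \<phi>0 (tt k) * \<phi> (s m)"
    unfolding rk_eq using m0 f0_pos[of k] by (simp add: mult.assoc mult_left_mono)
  also have "\<dots> \<le> \<phi>0 (s0 j) * \<phi> (s m)"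
    using qc_min[OF qc0 s0_pos tt_pos, of j k] fs_pos[of m] by (intro mult_right_mono) auto
  finally show ?thesis using fs0_pos[of j] fs_pos[of m] by (simp add: field_simps)
qed

lemma K1_le1': assumes "\<not> uu k \<le> s m" shows "min 1 (s1 j / tt k) * rk k * (s m / (\<phi>1 (s1 j) * \<phi> (s m))) \<le> 1"
proof -
  have m0: "0 \<le> min 1 (s1 j / tt k)" using s1_pos[of j] tt_pos[of k] by simp
  have "\<phi> (uu k) / uu k \<le> \<phi> (s m) / s m" using qc_anti[OF qc s_pos, of m "uu k"] assms by simp
  then have "\<phi> (uu k) / uu k * s m \<le> \<phi> (s m)" using s_pos[of m] by (simp add: field_simps)
  then have "(min 1 (s1 j / tt k) * \<phi>1 (tt k)) * (\<phi> (uu k) / uu k * s m) \<le> (min 1 (s1 j / tt k) * \<phi>1 (tt k)) * \<phi> (s m)"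
    using m0 f1_pos[of k] by (intro mult_left_mono) auto
  then have "min 1 (s1 j / tt k) * rk k * s m \<le> min 1 (s1 j / tt k) * \<phi>1 (tt k) * \<phi> (s m)"
    unfolding rk_eq1 by (simp add: ac_simps)
  also have "\<dots> \<le> \<phi>1 (s1 j) * \<phi> (s m)"
    using qc_min[OF qc1 s1_pos tt_pos, of j k] fs_pos[of m] by (intro mult_right_mono) auto
  finally show ?thesis using fs1_pos[of j] fs_pos[of m] by (simp add: field_simps)
qed

lemma K0_le1: "K0 m j k \<le> 1" unfolding K0_def using K0_le1' by simp
lemma K1_le1: "K1 m j k \<le> 1" unfolding K1_def using K1_le1' by simp

lemma row0: "zsum (\<lambda>k. ennreal (sqrt (K0 m j k))) \<le> ennreal (2 * gc)"
proof -
  have "zsum (\<lambda>k. ennreal (sqrt (K0 m j k)))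
      = zsum (\<lambda>k. if k \<in> {k. uu k \<le> s m} then ennreal (sqrt (min 1 (s0 j / tt k) * rk k * (1 / (\<phi>0 (s0 j) * \<phi> (s m))))) else 0)"
    by (rule arg_cong[where f=zsum]) (auto simp: K0_def)
  also have "\<dots> \<le> ennreal (2 * gc)"
    by (rule rowsum_gen[OF tt_inc s0_pos _ rk_inc rk_dec rk_pos]) (use K0_le1' fs0_pos fs_pos in auto)
  finally show ?thesis .
qed

lemma row1: "zsum (\<lambda>k. ennreal (sqrt (K1 m j k))) \<le> ennreal (2 * gc)"
proof -
  have "zsum (\<lambda>k. ennreal (sqrt (K1 m j k)))
      = zsum (\<lambda>k. if k \<in> {k. \<not> uu k \<le> s m} then ennreal (sqrt (min 1 (s1 j / tt k) * rk k * (s m / (\<phi>1 (s1 j) * \<phi> (s m))))) else 0)"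
    by (rule arg_cong[where f=zsum]) (auto simp: K1_def)
  also have "\<dots> \<le> ennreal (2 * gc)"
    by (rule rowsum_gen[OF tt_inc s1_pos _ rk_inc rk_dec rk_pos]) (use K1_le1' fs1_pos fs_pos s_pos in auto)
  finally show ?thesis .
qed

lemma ennreal_mult3: "0 \<le> a \<Longrightarrow> 0 \<le> b \<Longrightarrow> 0 \<le> c \<Longrightarrow> ennreal (a * b * c) = ennreal a * ennreal b * ennreal c"
  by (simp add: ennreal_mult)

lemma col0: "zsum (\<lambda>m. zsum (\<lambda>j. ennreal (sqrt (K0 m j k)))) \<le> ennreal (2 * gc ^ 2)"
proof -
  let ?Z = "zsum (\<lambda>j. ennreal (sqrt (min 1 (s0 j / tt k) / \<phi>0 (s0 j))))"
  have Z: "?Z \<le> ennreal (2 * gc / sqrt (\<phi>0 (tt k)))" by (rule colsum[OF qc0 d0 tt_pos])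
  have eq: "zsum (\<lambda>j. ennreal (sqrt (K0 m j k)))
      = (if uu k \<le> s m then ennreal (1 / sqrt (\<phi> (s m))) else 0) * (ennreal (sqrt (rk k)) * ?Z)" for m
  proof (cases "uu k \<le> s m")
    case True
    have "zsum (\<lambda>j. ennreal (sqrt (K0 m j k)))
        = zsum (\<lambda>j. (ennreal (1 / sqrt (\<phi> (s m))) * ennreal (sqrt (rk k))) * ennreal (sqrt (min 1 (s0 j / tt k) / \<phi>0 (s0 j))))"
    proof (rule arg_cong[where f=zsum], rule ext)
      fix j
      have e: "sqrt (K0 m j k) = (1 / sqrt (\<phi> (s m)) * sqrt (rk k)) * sqrt (min 1 (s0 j / tt k) / \<phi>0 (s0 j))"
        using True by (simp add: K0_def real_sqrt_mult real_sqrt_divide field_simps)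
      show "ennreal (sqrt (K0 m j k)) = (ennreal (1 / sqrt (\<phi> (s m))) * ennreal (sqrt (rk k))) * ennreal (sqrt (min 1 (s0 j / tt k) / \<phi>0 (s0 j)))"
        unfolding e using fs_pos[of m] rk_pos[of k] s0_pos[of j] fs0_pos[of j] tt_pos[of k]
        by (intro ennreal_mult3) auto
    qed
    also have "\<dots> = (ennreal (1 / sqrt (\<phi> (s m))) * ennreal (sqrt (rk k))) * ?Z" by (rule zsum_cmult)
    finally show ?thesis using True by (simp add: mult.assoc)
  next
    case False then show ?thesis by (simp add: K0_def zsum_def)
  qed
  have "zsum (\<lambda>m. zsum (\<lambda>j. ennreal (sqrt (K0 m j k))))
      = zsum (\<lambda>m. (if uu k \<le> s m then ennreal (1 / sqrt (\<phi> (s m))) else 0) * (ennreal (sqrt (rk k)) * ?Z))"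
    by (simp add: eq)
  also have "\<dots> = zsum (\<lambda>m. if uu k \<le> s m then ennreal (1 / sqrt (\<phi> (s m))) else 0) * (ennreal (sqrt (rk k)) * ?Z)"
    using zsum_cmult[of "ennreal (sqrt (rk k)) * ?Z" "\<lambda>m. if uu k \<le> s m then ennreal (1 / sqrt (\<phi> (s m))) else 0"]
    by (simp add: mult.commute)
  also have "\<dots> \<le> ennreal (gc / sqrt (\<phi> (uu k))) * (ennreal (sqrt (rk k)) * ennreal (2 * gc / sqrt (\<phi>0 (tt k))))"
    using gsum_up[OF qc s_inc _ uu_pos, of k] ds Z
    by (intro mult_mono) (auto simp: discretizing_def)
  also have "\<dots> = ennreal (2 * gc ^ 2 * (sqrt (rk k) / (sqrt (\<phi> (uu k)) * sqrt (\<phi>0 (tt k)))))"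
    using gc_pos rk_pos[of k] fu_pos[of k] f0_pos[of k]
    by (simp add: ennreal_mult[symmetric] power2_eq_square field_simps del: ennreal_mult')
  also have "sqrt (rk k) / (sqrt (\<phi> (uu k)) * sqrt (\<phi>0 (tt k))) = 1"
    using fu_pos[of k] f0_pos[of k] by (simp add: rk_eq real_sqrt_mult)
  finally show ?thesis by simp
qed

lemma col1: "zsum (\<lambda>m. zsum (\<lambda>j. ennreal (sqrt (K1 m j k)))) \<le> ennreal (2 * gc ^ 2)"
proof -
  let ?Z = "zsum (\<lambda>j. ennreal (sqrt (min 1 (s1 j / tt k) / \<phi>1 (s1 j))))"
  have Z: "?Z \<le> ennreal (2 * gc / sqrt (\<phi>1 (tt k)))" by (rule colsum[OF qc1 d1 tt_pos])
  have eq: "zsum (\<lambda>j. ennreal (sqrt (K1 m j k)))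
      = (if \<not> uu k \<le> s m then ennreal (sqrt (s m / \<phi> (s m))) else 0) * (ennreal (sqrt (rk k)) * ?Z)" for m
  proof (cases "uu k \<le> s m")
    case False
    have "zsum (\<lambda>j. ennreal (sqrt (K1 m j k)))
        = zsum (\<lambda>j. (ennreal (sqrt (s m / \<phi> (s m))) * ennreal (sqrt (rk k))) * ennreal (sqrt (min 1 (s1 j / tt k) / \<phi>1 (s1 j))))"
    proof (rule arg_cong[where f=zsum], rule ext)
      fix j
      have e: "sqrt (K1 m j k) = (sqrt (s m / \<phi> (s m)) * sqrt (rk k)) * sqrt (min 1 (s1 j / tt k) / \<phi>1 (s1 j))"
        using False by (simp add: K1_def real_sqrt_mult real_sqrt_divide field_simps)
      show "ennreal (sqrt (K1 m j k)) = (ennreal (sqrt (s m / \<phi> (s m))) * ennreal (sqrt (rk k))) * ennreal (sqrt (min 1 (s1 j / tt k) / \<phi>1 (s1 j)))"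
        unfolding e using fs_pos[of m] s_pos[of m] rk_pos[of k] s1_pos[of j] fs1_pos[of j] tt_pos[of k]
        by (intro ennreal_mult3) auto
    qed
    also have "\<dots> = (ennreal (sqrt (s m / \<phi> (s m))) * ennreal (sqrt (rk k))) * ?Z" by (rule zsum_cmult)
    finally show ?thesis using False by (simp add: mult.assoc)
  next
    case True then show ?thesis by (simp add: K1_def zsum_def)
  qed
  have "zsum (\<lambda>m. zsum (\<lambda>j. ennreal (sqrt (K1 m j k))))
      = zsum (\<lambda>m. (if \<not> uu k \<le> s m then ennreal (sqrt (s m / \<phi> (s m))) else 0) * (ennreal (sqrt (rk k)) * ?Z))"
    by (simp add: eq)
  also have "\<dots> = zsum (\<lambda>m. if \<not> uu k \<le> s m then ennreal (sqrt (s m / \<phi> (s m))) else 0) * (ennreal (sqrt (rk k)) * ?Z)"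
    using zsum_cmult[of "ennreal (sqrt (rk k)) * ?Z" "\<lambda>m. if \<not> uu k \<le> s m then ennreal (sqrt (s m / \<phi> (s m))) else 0"]
    by (simp add: mult.commute)
  also have "zsum (\<lambda>m. if \<not> uu k \<le> s m then ennreal (sqrt (s m / \<phi> (s m))) else 0)
      \<le> zsum (\<lambda>m. if s m \<le> uu k then ennreal (sqrt (s m / \<phi> (s m))) else 0)"
    by (rule zsum_mono) auto
  also have "\<dots> \<le> ennreal (gc * sqrt (uu k / \<phi> (uu k)))"
    using gsum_down[OF qc s_inc _ uu_pos, of k] ds by (auto simp: discretizing_def)
  also have "ennreal (gc * sqrt (uu k / \<phi> (uu k))) * (ennreal (sqrt (rk k)) * ?Z)
      \<le> ennreal (gc * sqrt (uu k / \<phi> (uu k))) * (ennreal (sqrt (rk k)) * ennreal (2 * gc / sqrt (\<phi>1 (tt k))))"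
    using Z by (intro mult_left_mono) auto
  also have "\<dots> = ennreal (2 * gc ^ 2 * (sqrt (uu k / \<phi> (uu k)) * sqrt (rk k) / sqrt (\<phi>1 (tt k))))"
    using gc_pos rk_pos[of k] fu_pos[of k] f1_pos[of k] uu_pos[of k]
    by (simp add: ennreal_mult[symmetric] power2_eq_square field_simps del: ennreal_mult')
  also have "sqrt (uu k / \<phi> (uu k)) * sqrt (rk k) / sqrt (\<phi>1 (tt k)) = 1"
    using fu_pos[of k] f1_pos[of k] uu_pos[of k]
    by (simp add: rk_eq1 real_sqrt_mult real_sqrt_divide field_simps)
  finally show ?thesis by (simp add: mult_right_mono)
qed

end

lemma zsum_cmult_right: "zsum (\<lambda>k. f k * c) = zsum f * c"
  using zsum_cmult[of c f] by (simp add: mult.commute)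

lemma zsum_swap3:
  "zsum (\<lambda>m. zsum (\<lambda>j. zsum (\<lambda>k. F m j k * G k))) = zsum (\<lambda>k. G k * zsum (\<lambda>m. zsum (\<lambda>j. F m j k)))"
proof -
  have 1: "zsum (\<lambda>j. zsum (\<lambda>k. F m j k * G k)) = zsum (\<lambda>k. zsum (\<lambda>j. F m j k) * G k)" for m
    by (subst zsum_swap) (simp add: zsum_cmult_right)
  have "zsum (\<lambda>m. zsum (\<lambda>j. zsum (\<lambda>k. F m j k * G k))) = zsum (\<lambda>m. zsum (\<lambda>k. zsum (\<lambda>j. F m j k) * G k))"
    by (simp add: 1)
  also have "\<dots> = zsum (\<lambda>k. zsum (\<lambda>m. zsum (\<lambda>j. F m j k) * G k))" by (rule zsum_swap)
  also have "\<dots> = zsum (\<lambda>k. zsum (\<lambda>m. zsum (\<lambda>j. F m j k)) * G k)"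
    by (simp only: zsum_cmult_right)
  also have "\<dots> = zsum (\<lambda>k. G k * zsum (\<lambda>m. zsum (\<lambda>j. F m j k)))"
    by (simp only: mult.commute)
  finally show ?thesis .
qed

lemma Kspace_eq: "Kspace N0 N1 \<sigma> \<psi> p x = lp_enn p (\<lambda>k. Kfun N0 N1 (\<sigma> k) x / ennreal (\<psi> (\<sigma> k)))"
  by (simp add: Kspace_def)

context L310 begin

abbreviation "Nb0 \<equiv> lqw q (\<lambda>_. 1)"
abbreviation "Nb1 \<equiv> lqw q (\<lambda>k. 1 / tt k)"
abbreviation "N0 \<equiv> Kspace Nb0 Nb1 s0 \<phi>0 p"
abbreviation "N1 \<equiv> Kspace Nb0 Nb1 s1 \<phi>1 p"
abbreviation "Outer \<equiv> Kspace N0 N1 s \<phi> p"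
abbreviation "Mn \<equiv> lqw p (\<lambda>i. 1 / fcomp \<phi> \<phi>0 \<phi>1 (tt i))"

definition bx :: "(int \<Rightarrow> real) \<Rightarrow> int \<Rightarrow> real" where "bx x k = \<bar>x k\<bar> / rk k"

lemma bx_nn: "0 \<le> bx x k" unfolding bx_def using rk_pos[of k] by simp

lemma Mn_eq: "Mn x = lp_enn p (\<lambda>i. ennreal (bx x i))"
proof -
  have "\<bar>x i * (1 / fcomp \<phi> \<phi>0 \<phi>1 (tt i))\<bar> = bx x i" for i
    using rk_pos[of i] unfolding bx_def rk_def by (simp add: abs_mult)
  then show ?thesis unfolding lqw_def by simp
qed

definition x0m :: "(int \<Rightarrow> real) \<Rightarrow> int \<Rightarrow> int \<Rightarrow> real" where "x0m x m k = (if uu k \<le> s m then x k else 0)"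
definition x1m :: "(int \<Rightarrow> real) \<Rightarrow> int \<Rightarrow> int \<Rightarrow> real" where "x1m x m k = (if uu k \<le> s m then 0 else x k)"

lemma A0: "Kfun Nb0 Nb1 (s0 j) (x0m x m) * ennreal (1 / \<phi>0 (s0 j)) * ennreal (1 / \<phi> (s m))
    \<le> zsum (\<lambda>k. ennreal (K0 m j k * bx x k))"
proof -
  have "Kfun Nb0 Nb1 (s0 j) (x0m x m) * ennreal (1 / \<phi>0 (s0 j)) * ennreal (1 / \<phi> (s m))
      \<le> zsum (\<lambda>k. ennreal (min 1 (s0 j / tt k) * \<bar>x0m x m k\<bar>)) * ennreal (1 / \<phi>0 (s0 j)) * ennreal (1 / \<phi> (s m))"
    using Kb_le[OF q s0_pos[of j] tt_pos, where y="x0m x m"] by (intro mult_right_mono) auto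
  also have "\<dots> = zsum (\<lambda>k. ennreal (min 1 (s0 j / tt k) * \<bar>x0m x m k\<bar>) * ennreal (1 / \<phi>0 (s0 j)) * ennreal (1 / \<phi> (s m)))"
    by (simp add: zsum_cmult_right)
  also have "\<dots> = zsum (\<lambda>k. ennreal (K0 m j k * bx x k))"
  proof (rule arg_cong[where f=zsum], rule ext)
    fix k
    show "ennreal (min 1 (s0 j / tt k) * \<bar>x0m x m k\<bar>) * ennreal (1 / \<phi>0 (s0 j)) * ennreal (1 / \<phi> (s m))
        = ennreal (K0 m j k * bx x k)"
    proof (cases "uu k \<le> s m")
      case True
      have "ennreal (min 1 (s0 j / tt k) * \<bar>x0m x m k\<bar>) * ennreal (1 / \<phi>0 (s0 j)) * ennreal (1 / \<phi> (s m))
          = ennreal (min 1 (s0 j / tt k) * \<bar>x0m x m k\<bar> * (1 / \<phi>0 (s0 j)) * (1 / \<phi> (s m)))"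
        using s0_pos[of j] tt_pos[of k] fs0_pos[of j] fs_pos[of m] by (intro ennreal_mult3[symmetric]) auto
      also have "min 1 (s0 j / tt k) * \<bar>x0m x m k\<bar> * (1 / \<phi>0 (s0 j)) * (1 / \<phi> (s m)) = K0 m j k * bx x k"
        using True rk_pos[of k] fs0_pos[of j] fs_pos[of m] by (simp add: K0_def x0m_def bx_def field_simps)
      finally show ?thesis .
    qed (simp add: K0_def x0m_def)
  qed
  finally show ?thesis .
qed

lemma A1: "Kfun Nb0 Nb1 (s1 j) (x1m x m) * ennreal (1 / \<phi>1 (s1 j)) * ennreal (s m / \<phi> (s m))
    \<le> zsum (\<lambda>k. ennreal (K1 m j k * bx x k))"
proof -
  have "Kfun Nb0 Nb1 (s1 j) (x1m x m) * ennreal (1 / \<phi>1 (s1 j)) * ennreal (s m / \<phi> (s m))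
      \<le> zsum (\<lambda>k. ennreal (min 1 (s1 j / tt k) * \<bar>x1m x m k\<bar>)) * ennreal (1 / \<phi>1 (s1 j)) * ennreal (s m / \<phi> (s m))"
    using Kb_le[OF q s1_pos[of j] tt_pos, where y="x1m x m"] by (intro mult_right_mono) auto
  also have "\<dots> = zsum (\<lambda>k. ennreal (min 1 (s1 j / tt k) * \<bar>x1m x m k\<bar>) * ennreal (1 / \<phi>1 (s1 j)) * ennreal (s m / \<phi> (s m)))"
    by (simp add: zsum_cmult_right)
  also have "\<dots> = zsum (\<lambda>k. ennreal (K1 m j k * bx x k))"
  proof (rule arg_cong[where f=zsum], rule ext)
    fix k
    show "ennreal (min 1 (s1 j / tt k) * \<bar>x1m x m k\<bar>) * ennreal (1 / \<phi>1 (s1 j)) * ennreal (s m / \<phi> (s m))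
        = ennreal (K1 m j k * bx x k)"
    proof (cases "uu k \<le> s m")
      case False
      have "ennreal (min 1 (s1 j / tt k) * \<bar>x1m x m k\<bar>) * ennreal (1 / \<phi>1 (s1 j)) * ennreal (s m / \<phi> (s m))
          = ennreal (min 1 (s1 j / tt k) * \<bar>x1m x m k\<bar> * (1 / \<phi>1 (s1 j)) * (s m / \<phi> (s m)))"
        using s1_pos[of j] tt_pos[of k] fs1_pos[of j] fs_pos[of m] s_pos[of m] by (intro ennreal_mult3[symmetric]) auto
      also have "min 1 (s1 j / tt k) * \<bar>x1m x m k\<bar> * (1 / \<phi>1 (s1 j)) * (s m / \<phi> (s m)) = K1 m j k * bx x k"
        using False rk_pos[of k] fs1_pos[of j] fs_pos[of m] by (simp add: K1_def x1m_def bx_def field_simps)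
      finally show ?thesis .
    qed (simp add: K1_def x1m_def)
  qed
  finally show ?thesis .
qed

lemma N0b: assumes P: "1 \<le> P" "p = ennreal P"
  shows "enn_pow P (N0 (x0m x m) * ennreal (1 / \<phi> (s m)))
     \<le> ennreal ((2 * gc) powr P) * zsum (\<lambda>j. zsum (\<lambda>k. ennreal (sqrt (K0 m j k)) * enn_pow P (ennreal (bx x k))))"
proof -
  let ?c = "ennreal (1 / \<phi> (s m))"
  let ?Kb = "\<lambda>j. Kfun Nb0 Nb1 (s0 j) (x0m x m)"
  have P0: "0 < P" using P by simp
  have "enn_pow P (N0 (x0m x m) * ?c) = enn_pow P (N0 (x0m x m)) * enn_pow P ?c"
    using P0 by (rule ep_mult)
  also have "enn_pow P (N0 (x0m x m)) = zsum (\<lambda>j. enn_pow P (?Kb j / ennreal (\<phi>0 (s0 j))))"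
    unfolding Kspace_def P(2) by (rule lp_pow[OF P(1)])
  also have "zsum (\<lambda>j. enn_pow P (?Kb j / ennreal (\<phi>0 (s0 j)))) * enn_pow P ?c
      = zsum (\<lambda>j. enn_pow P (?Kb j * ennreal (1 / \<phi>0 (s0 j)) * ?c))"
  proof -
    have "enn_pow P (?Kb j / ennreal (\<phi>0 (s0 j))) * enn_pow P ?c = enn_pow P (?Kb j * ennreal (1 / \<phi>0 (s0 j)) * ?c)" for j
      using P0 fs0_pos[of j] by (simp add: ennreal_div_eq ep_mult)
    then show ?thesis by (simp add: zsum_cmult_right[symmetric])
  qed
  also have "\<dots> \<le> zsum (\<lambda>j. enn_pow P (zsum (\<lambda>k. ennreal (sqrt (K0 m j k) ^ 2 * bx x k))))"
  proof (rule zsum_mono)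
    fix j
    have "zsum (\<lambda>k. ennreal (K0 m j k * bx x k)) = zsum (\<lambda>k. ennreal (sqrt (K0 m j k) ^ 2 * bx x k))"
      using K0_nn by simp
    then show "enn_pow P (?Kb j * ennreal (1 / \<phi>0 (s0 j)) * ?c) \<le> enn_pow P (zsum (\<lambda>k. ennreal (sqrt (K0 m j k) ^ 2 * bx x k)))"
      using A0[of j x m] P0 by (intro ep_mono) auto
  qed
  also have "\<dots> \<le> zsum (\<lambda>j. ennreal ((2 * gc) powr P) * zsum (\<lambda>k. ennreal (sqrt (K0 m j k)) * enn_pow P (ennreal (bx x k))))"
  proof (rule zsum_mono)
    fix j
    show "enn_pow P (zsum (\<lambda>k. ennreal (sqrt (K0 m j k) ^ 2 * bx x k)))
        \<le> ennreal ((2 * gc) powr P) * zsum (\<lambda>k. ennreal (sqrt (K0 m j k)) * enn_pow P (ennreal (bx x k)))"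
      by (rule SR[OF P(1)]) (use K0_nn K0_le1 row0 gc_pos bx_nn in auto)
  qed
  also have "\<dots> = ennreal ((2 * gc) powr P) * zsum (\<lambda>j. zsum (\<lambda>k. ennreal (sqrt (K0 m j k)) * enn_pow P (ennreal (bx x k))))"
    by (rule zsum_cmult)
  finally show ?thesis .
qed

lemma N1b: assumes P: "1 \<le> P" "p = ennreal P"
  shows "enn_pow P (N1 (x1m x m) * ennreal (s m / \<phi> (s m)))
     \<le> ennreal ((2 * gc) powr P) * zsum (\<lambda>j. zsum (\<lambda>k. ennreal (sqrt (K1 m j k)) * enn_pow P (ennreal (bx x k))))"
proof -
  let ?c = "ennreal (s m / \<phi> (s m))"
  let ?Kb = "\<lambda>j. Kfun Nb0 Nb1 (s1 j) (x1m x m)"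
  have P0: "0 < P" using P by simp
  have "enn_pow P (N1 (x1m x m) * ?c) = enn_pow P (N1 (x1m x m)) * enn_pow P ?c"
    using P0 by (rule ep_mult)
  also have "enn_pow P (N1 (x1m x m)) = zsum (\<lambda>j. enn_pow P (?Kb j / ennreal (\<phi>1 (s1 j))))"
    unfolding Kspace_def P(2) by (rule lp_pow[OF P(1)])
  also have "zsum (\<lambda>j. enn_pow P (?Kb j / ennreal (\<phi>1 (s1 j)))) * enn_pow P ?c
      = zsum (\<lambda>j. enn_pow P (?Kb j * ennreal (1 / \<phi>1 (s1 j)) * ?c))"
  proof -
    have "enn_pow P (?Kb j / ennreal (\<phi>1 (s1 j))) * enn_pow P ?c = enn_pow P (?Kb j * ennreal (1 / \<phi>1 (s1 j)) * ?c)" for j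
      using P0 fs1_pos[of j] by (simp add: ennreal_div_eq ep_mult)
    then show ?thesis by (simp add: zsum_cmult_right[symmetric])
  qed
  also have "\<dots> \<le> zsum (\<lambda>j. enn_pow P (zsum (\<lambda>k. ennreal (sqrt (K1 m j k) ^ 2 * bx x k))))"
  proof (rule zsum_mono)
    fix j
    have "zsum (\<lambda>k. ennreal (K1 m j k * bx x k)) = zsum (\<lambda>k. ennreal (sqrt (K1 m j k) ^ 2 * bx x k))"
      using K1_nn by simp
    then show "enn_pow P (?Kb j * ennreal (1 / \<phi>1 (s1 j)) * ?c) \<le> enn_pow P (zsum (\<lambda>k. ennreal (sqrt (K1 m j k) ^ 2 * bx x k)))"
      using A1[of j x m] P0 by (intro ep_mono) auto
  qed
  also have "\<dots> \<le> zsum (\<lambda>j. ennreal ((2 * gc) powr P) * zsum (\<lambda>k. ennreal (sqrt (K1 m j k)) * enn_pow P (ennreal (bx x k))))"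
  proof (rule zsum_mono)
    fix j
    show "enn_pow P (zsum (\<lambda>k. ennreal (sqrt (K1 m j k) ^ 2 * bx x k)))
        \<le> ennreal ((2 * gc) powr P) * zsum (\<lambda>k. ennreal (sqrt (K1 m j k)) * enn_pow P (ennreal (bx x k)))"
      by (rule SR[OF P(1)]) (use K1_nn K1_le1 row1 gc_pos bx_nn in auto)
  qed
  also have "\<dots> = ennreal ((2 * gc) powr P) * zsum (\<lambda>j. zsum (\<lambda>k. ennreal (sqrt (K1 m j k)) * enn_pow P (ennreal (bx x k))))"
    by (rule zsum_cmult)
  finally show ?thesis .
qed

lemma Kf_bound: "Kfun N0 N1 (s m) x / ennreal (\<phi> (s m))
    \<le> N0 (x0m x m) * ennreal (1 / \<phi> (s m)) + N1 (x1m x m) * ennreal (s m / \<phi> (s m))"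
proof -
  have dec: "\<forall>i. x i = x0m x m i + x1m x m i" by (simp add: x0m_def x1m_def)
  have "Kfun N0 N1 (s m) x / ennreal (\<phi> (s m)) = Kfun N0 N1 (s m) x * ennreal (1 / \<phi> (s m))"
    using fs_pos[of m] by (rule ennreal_div_eq)
  also have "\<dots> \<le> (N0 (x0m x m) + ennreal (s m) * N1 (x1m x m)) * ennreal (1 / \<phi> (s m))"
    by (intro mult_right_mono Kfun_le[OF dec]) auto
  also have "\<dots> = N0 (x0m x m) * ennreal (1 / \<phi> (s m)) + N1 (x1m x m) * (ennreal (s m) * ennreal (1 / \<phi> (s m)))"
    by (simp add: algebra_simps)
  also have "ennreal (s m) * ennreal (1 / \<phi> (s m)) = ennreal (s m / \<phi> (s m))"
    using s_pos[of m] fs_pos[of m] by (simp add: ennreal_mult[symmetric])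
  finally show ?thesis .
qed

lemma upper_fin: assumes P: "1 \<le> P" "p = ennreal P"
  shows "enn_pow P (Outer x) \<le> ennreal (2 powr P * (2 * gc) powr P * (4 * gc ^ 2)) * enn_pow P (Mn x)"
proof -
  have P0: "0 < P" using P by simp
  let ?E = "ennreal ((2 * gc) powr P)"
  let ?T = "ennreal (2 powr P)"
  let ?pw = "\<lambda>k. enn_pow P (ennreal (bx x k))"
  let ?S0 = "\<lambda>m. zsum (\<lambda>j. zsum (\<lambda>k. ennreal (sqrt (K0 m j k)) * ?pw k))"
  let ?S1 = "\<lambda>m. zsum (\<lambda>j. zsum (\<lambda>k. ennreal (sqrt (K1 m j k)) * ?pw k))"
  have "enn_pow P (Outer x) = zsum (\<lambda>m. enn_pow P (Kfun N0 N1 (s m) x / ennreal (\<phi> (s m))))"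
    unfolding P(2) by (subst Kspace_eq) (rule lp_pow[OF P(1)])
  also have "\<dots> \<le> zsum (\<lambda>m. ?T * ?E * (?S0 m + ?S1 m))"
  proof (rule zsum_mono)
    fix m
    have "enn_pow P (Kfun N0 N1 (s m) x / ennreal (\<phi> (s m)))
        \<le> enn_pow P (N0 (x0m x m) * ennreal (1 / \<phi> (s m)) + N1 (x1m x m) * ennreal (s m / \<phi> (s m)))"
      using P0 Kf_bound by (intro ep_mono) auto
    also have "\<dots> \<le> ?T * (enn_pow P (N0 (x0m x m) * ennreal (1 / \<phi> (s m))) + enn_pow P (N1 (x1m x m) * ennreal (s m / \<phi> (s m))))"
      using P0 by (rule ep_add)
    also have "\<dots> \<le> ?T * (?E * ?S0 m + ?E * ?S1 m)"
      using N0b[OF P, of x m] N1b[OF P, of x m] by (intro mult_left_mono add_mono) auto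
    also have "\<dots> = ?T * ?E * (?S0 m + ?S1 m)" by (simp add: distrib_left mult_ac)
    finally show "enn_pow P (Kfun N0 N1 (s m) x / ennreal (\<phi> (s m))) \<le> ?T * ?E * (?S0 m + ?S1 m)" .
  qed
  also have "\<dots> = ?T * ?E * (zsum ?S0 + zsum ?S1)" by (simp add: zsum_cmult zsum_add)
  also have "zsum ?S0 = zsum (\<lambda>k. ?pw k * zsum (\<lambda>m. zsum (\<lambda>j. ennreal (sqrt (K0 m j k)))))"
    by (rule zsum_swap3)
  also have "\<dots> \<le> zsum (\<lambda>k. ?pw k * ennreal (2 * gc ^ 2))"
    by (intro zsum_mono mult_left_mono col0) auto
  also have "zsum ?S1 = zsum (\<lambda>k. ?pw k * zsum (\<lambda>m. zsum (\<lambda>j. ennreal (sqrt (K1 m j k)))))"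
    by (rule zsum_swap3)
  also have "\<dots> \<le> zsum (\<lambda>k. ?pw k * ennreal (2 * gc ^ 2))"
    by (intro zsum_mono mult_left_mono col1) auto
  also have "zsum (\<lambda>k. ?pw k * ennreal (2 * gc ^ 2)) = zsum ?pw * ennreal (2 * gc ^ 2)"
    by (rule zsum_cmult_right)
  also have "zsum ?pw = enn_pow P (Mn x)"
    using Mn_eq[of x] lp_pow[OF P(1), of "\<lambda>k. ennreal (bx x k)"] P(2) by simp
  also have "?T * ?E * (enn_pow P (Mn x) * ennreal (2 * gc ^ 2) + enn_pow P (Mn x) * ennreal (2 * gc ^ 2))
      = ennreal (2 powr P * (2 * gc) powr P * (4 * gc ^ 2)) * enn_pow P (Mn x)"
  proof -
    have "?T * ?E * (enn_pow P (Mn x) * ennreal (2 * gc ^ 2) + enn_pow P (Mn x) * ennreal (2 * gc ^ 2))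
       = (?T * ?E * (ennreal (2 * gc ^ 2) + ennreal (2 * gc ^ 2))) * enn_pow P (Mn x)"
      by (simp add: algebra_simps)
    also have "?T * ?E * (ennreal (2 * gc ^ 2) + ennreal (2 * gc ^ 2)) = ennreal (2 powr P * (2 * gc) powr P * (4 * gc ^ 2))"
      using gc_pos by (simp add: ennreal_mult[symmetric] ennreal_plus[symmetric] del: ennreal_plus)
    finally show ?thesis .
  qed
  finally show ?thesis by (simp add: add_mono mult_left_mono)
qed

lemma le_sqrt_self: fixes y :: real assumes "0 \<le> y" "y \<le> 1" shows "y \<le> sqrt y"
proof -
  have "sqrt y \<le> 1" using assms by simp
  then have "sqrt y * sqrt y \<le> sqrt y * 1" using assms by (intro mult_left_mono) auto
  then show ?thesis using assms by simp
qed

lemma zK_top: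
  assumes nn: "\<And>k. 0 \<le> K k" and le1: "\<And>k. K k \<le> 1" and row: "zsum (\<lambda>k. ennreal (sqrt (K k))) \<le> ennreal R"
  shows "zsum (\<lambda>k. ennreal (K k * bx x k)) \<le> ennreal R * (SUP k. ennreal (bx x k))"
proof -
  have "zsum (\<lambda>k. ennreal (K k * bx x k)) \<le> zsum (\<lambda>k. ennreal (sqrt (K k)) * (SUP k. ennreal (bx x k)))"
  proof (rule zsum_mono)
    fix k
    have "ennreal (K k * bx x k) = ennreal (K k) * ennreal (bx x k)" using nn[of k] bx_nn by (simp add: ennreal_mult)
    also have "\<dots> \<le> ennreal (sqrt (K k)) * (SUP k. ennreal (bx x k))"
      using le_sqrt_self[OF nn le1, of k] by (intro mult_mono SUP_upper ennreal_leI) auto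
    finally show "ennreal (K k * bx x k) \<le> ennreal (sqrt (K k)) * (SUP k. ennreal (bx x k))" .
  qed
  also have "\<dots> = zsum (\<lambda>k. ennreal (sqrt (K k))) * (SUP k. ennreal (bx x k))" by (rule zsum_cmult_right)
  also have "\<dots> \<le> ennreal R * (SUP k. ennreal (bx x k))" using row by (rule mult_right_mono) simp
  finally show ?thesis .
qed

lemma upper_top: assumes pt: "p = top" shows "Outer x \<le> ennreal (4 * gc) * Mn x"
proof -
  let ?Mb = "SUP k. ennreal (bx x k)"
  have Mn: "Mn x = ?Mb" using Mn_eq[of x] pt by (simp add: lp_top)
  have B0: "N0 (x0m x m) * ennreal (1 / \<phi> (s m)) \<le> ennreal (2 * gc) * ?Mb" for m
  proof -
    have "N0 (x0m x m) * ennreal (1 / \<phi> (s m)) = (SUP j. Kfun Nb0 Nb1 (s0 j) (x0m x m) / ennreal (\<phi>0 (s0 j))) * ennreal (1 / \<phi> (s m))"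
      unfolding pt by (simp add: Kspace_def lp_top)
    also have "\<dots> = (SUP j. Kfun Nb0 Nb1 (s0 j) (x0m x m) / ennreal (\<phi>0 (s0 j)) * ennreal (1 / \<phi> (s m)))"
      by (rule SUP_mult_right_ennreal)
    also have "\<dots> \<le> ennreal (2 * gc) * ?Mb"
    proof (rule SUP_least)
      fix j
      have "Kfun Nb0 Nb1 (s0 j) (x0m x m) / ennreal (\<phi>0 (s0 j)) * ennreal (1 / \<phi> (s m))
          = Kfun Nb0 Nb1 (s0 j) (x0m x m) * ennreal (1 / \<phi>0 (s0 j)) * ennreal (1 / \<phi> (s m))"
        using fs0_pos[of j] by (simp add: ennreal_div_eq)
      also have "\<dots> \<le> zsum (\<lambda>k. ennreal (K0 m j k * bx x k))" by (rule A0)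
      also have "\<dots> \<le> ennreal (2 * gc) * ?Mb" by (rule zK_top[OF K0_nn K0_le1 row0])
      finally show "Kfun Nb0 Nb1 (s0 j) (x0m x m) / ennreal (\<phi>0 (s0 j)) * ennreal (1 / \<phi> (s m)) \<le> ennreal (2 * gc) * ?Mb" .
    qed
    finally show ?thesis .
  qed
  have B1: "N1 (x1m x m) * ennreal (s m / \<phi> (s m)) \<le> ennreal (2 * gc) * ?Mb" for m
  proof -
    have "N1 (x1m x m) * ennreal (s m / \<phi> (s m)) = (SUP j. Kfun Nb0 Nb1 (s1 j) (x1m x m) / ennreal (\<phi>1 (s1 j))) * ennreal (s m / \<phi> (s m))"
      unfolding pt by (simp add: Kspace_def lp_top)
    also have "\<dots> = (SUP j. Kfun Nb0 Nb1 (s1 j) (x1m x m) / ennreal (\<phi>1 (s1 j)) * ennreal (s m / \<phi> (s m)))"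
      by (rule SUP_mult_right_ennreal)
    also have "\<dots> \<le> ennreal (2 * gc) * ?Mb"
    proof (rule SUP_least)
      fix j
      have "Kfun Nb0 Nb1 (s1 j) (x1m x m) / ennreal (\<phi>1 (s1 j)) * ennreal (s m / \<phi> (s m))
          = Kfun Nb0 Nb1 (s1 j) (x1m x m) * ennreal (1 / \<phi>1 (s1 j)) * ennreal (s m / \<phi> (s m))"
        using fs1_pos[of j] by (simp add: ennreal_div_eq)
      also have "\<dots> \<le> zsum (\<lambda>k. ennreal (K1 m j k * bx x k))" by (rule A1)
      also have "\<dots> \<le> ennreal (2 * gc) * ?Mb" by (rule zK_top[OF K1_nn K1_le1 row1])
      finally show "Kfun Nb0 Nb1 (s1 j) (x1m x m) / ennreal (\<phi>1 (s1 j)) * ennreal (s m / \<phi> (s m)) \<le> ennreal (2 * gc) * ?Mb" .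
    qed
    finally show ?thesis .
  qed
  have "Outer x = (SUP m. Kfun N0 N1 (s m) x / ennreal (\<phi> (s m)))"
    unfolding pt by (subst Kspace_eq) (simp add: lp_top)
  also have "\<dots> \<le> ennreal (4 * gc) * ?Mb"
  proof (rule SUP_least)
    fix m
    have "Kfun N0 N1 (s m) x / ennreal (\<phi> (s m)) \<le> ennreal (2 * gc) * ?Mb + ennreal (2 * gc) * ?Mb"
      using Kf_bound[of m x] B0[of m] B1[of m] by (meson add_mono order_trans)
    also have "\<dots> = ennreal (4 * gc) * ?Mb"
      using gc_pos by (simp add: distrib_right[symmetric] ennreal_plus[symmetric] del: ennreal_plus)
    finally show "Kfun N0 N1 (s m) x / ennreal (\<phi> (s m)) \<le> ennreal (4 * gc) * ?Mb" .
  qed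
  finally show ?thesis using Mn by simp
qed

end

lemma ratio4:
  fixes a b a' b' :: real
  assumes "0 < a" "0 < b" "0 < a'" "0 < b'" "2 ^ d * (a * b) \<le> a' * b'" "a' \<le> 2 * a" "b' \<le> 2 * b"
  shows "(2::real) ^ d \<le> 4"
proof -
  have "a' * b' \<le> (2 * a) * (2 * b)" using assms by (intro mult_mono) auto
  then have "2 ^ d * (a * b) \<le> 4 * (a * b)" using assms(5) by simp
  then show ?thesis using assms(1,2) by (simp add: mult_le_cancel_right)
qed

lemma decay4:
  fixes a b a' b' :: real
  assumes "0 < a" "0 < b" "0 < a'" "0 < b'" "2 ^ d * (a * b) \<le> a' * b'" "a' \<le> 2 * a"
  shows "2 ^ d * b \<le> 2 * b'"
proof -
  have "a' * b' \<le> (2 * a) * b'" using assms by (intro mult_right_mono) auto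
  then have "a * (2 ^ d * b) \<le> a * (2 * b')" using assms(5) by (simp add: algebra_simps)
  then show ?thesis using assms(1) by simp
qed

lemma uconv:
  fixes u u' F F' :: real
  assumes "0 < u" "0 < u'" "0 < F" "0 < F'" "2 ^ d * F \<le> 2 * F'" "F' / u' \<le> 2 * (F / u)"
  shows "2 ^ d * u \<le> 4 * u'"
proof -
  have "F' \<le> 2 * F * u' / u" using assms(6) assms(1,2) by (simp add: field_simps)
  then have "2 ^ d * F \<le> 4 * F * u' / u" using assms(5) by simp
  then have "2 ^ d * F * u \<le> 4 * F * u'" using assms(1) by (simp add: field_simps)
  then have "F * (2 ^ d * u) \<le> F * (4 * u')" by (simp add: algebra_simps)
  then show ?thesis using assms(3) by simp
qed

lemma uconv2:
  fixes u u' F F' :: real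
  assumes "0 < u" "0 < u'" "0 < F" "0 < F'" "2 ^ d * (F / u) \<le> 2 * (F' / u')" "F' \<le> 2 * F"
  shows "2 ^ d * u' \<le> 4 * u"
proof -
  have "2 * (F' / u') \<le> 2 * (2 * F / u')" using assms by (simp add: divide_right_mono)
  then have "2 ^ d * (F / u) \<le> 4 * F / u'" using assms(5) by simp
  then have "2 ^ d * F * u' \<le> 4 * F * u" using assms(1,2) by (simp add: field_simps)
  then have "F * (2 ^ d * u') \<le> F * (4 * u)" by (simp add: algebra_simps)
  then show ?thesis using assms(3) by simp
qed

lemma geo_class:
  fixes w :: "int \<Rightarrow> real"
  assumes bL: "\<And>k. k \<in> G \<Longrightarrow> L \<le> k" and bU: "\<And>k. k \<in> G \<Longrightarrow> k \<le> U"
    and w1: "\<And>k. k \<in> G \<Longrightarrow> w k \<le> 1"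
    and dec: "(\<forall>k k'. k \<in> G \<longrightarrow> k' \<in> G \<longrightarrow> k < k' \<longrightarrow> w k' \<le> 4 * (1/2) ^ nat (k' - k))
            \<or> (\<forall>k k'. k \<in> G \<longrightarrow> k' \<in> G \<longrightarrow> k < k' \<longrightarrow> w k \<le> 4 * (1/2) ^ nat (k' - k))"
  shows "zsum (\<lambda>k. if k \<in> G then ennreal (w k) else 0) \<le> ennreal 8"
  using dec
proof
  assume d: "\<forall>k k'. k \<in> G \<longrightarrow> k' \<in> G \<longrightarrow> k < k' \<longrightarrow> w k' \<le> 4 * (1/2) ^ nat (k' - k)"
  have "zsum (\<lambda>k. if k \<in> G then ennreal (w k) else 0) \<le> ennreal (4 / (1 - 1/2))"
    by (rule geo_fwd[where L=L]) (use bL w1 d in \<open>force+\<close>)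
  then show ?thesis by simp
next
  assume d: "\<forall>k k'. k \<in> G \<longrightarrow> k' \<in> G \<longrightarrow> k < k' \<longrightarrow> w k \<le> 4 * (1/2) ^ nat (k' - k)"
  have "zsum (\<lambda>k. if k \<in> G then ennreal (w k) else 0) \<le> ennreal (4 / (1 - 1/2))"
    by (rule geo_bwd[where U=U]) (use bU w1 d in \<open>force+\<close>)
  then show ?thesis by simp
qed

lemma pow_half: "(2::real) ^ n \<le> 4 \<Longrightarrow> 1 \<le> 4 * (1/2::real) ^ n"
  by (simp add: power_one_over field_simps)

lemma pow_half2: fixes X Y :: real assumes "2 ^ n * X \<le> 4 * Y" "0 \<le> X"
  shows "X \<le> 4 * (1/2) ^ n * Y"
  using assms by (simp add: power_one_over field_simps)

context L310 begin

definition ty0 :: "int \<Rightarrow> bool" where "ty0 = (SOME typ. typ_ok s0 \<phi>0 typ)"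
definition ty1 :: "int \<Rightarrow> bool" where "ty1 = (SOME typ. typ_ok s1 \<phi>1 typ)"
definition tys :: "int \<Rightarrow> bool" where "tys = (SOME typ. typ_ok s \<phi> typ)"

lemma ty0_ok: "typ_ok s0 \<phi>0 ty0" unfolding ty0_def using typ_ex[OF d0] by (rule someI_ex)
lemma ty1_ok: "typ_ok s1 \<phi>1 ty1" unfolding ty1_def using typ_ex[OF d1] by (rule someI_ex)
lemma tys_ok: "typ_ok s \<phi> tys" unfolding tys_def using typ_ex[OF ds] by (rule someI_ex)

definition c0 :: "int \<Rightarrow> int" where "c0 k = cell s0 (tt k)"
definition c1 :: "int \<Rightarrow> int" where "c1 k = cell s1 (tt k)"
definition cu :: "int \<Rightarrow> int" where "cu k = cell s (uu k)"
definition j0 :: "int \<Rightarrow> int" where "j0 k = jsel s0 ty0 (tt k)"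
definition j1 :: "int \<Rightarrow> int" where "j1 k = jsel s1 ty1 (tt k)"
definition mk :: "int \<Rightarrow> int" where "mk k = jsel s tys (uu k)"
definition w0 :: "int \<Rightarrow> int \<Rightarrow> real" where "w0 m k = min 1 (s m / uu k)"
definition w1 :: "int \<Rightarrow> int \<Rightarrow> real" where "w1 m k = min 1 (uu k / s m)"

lemma c0_prop: "s0 (c0 k) \<le> tt k" "tt k < s0 (c0 k + 1)"
  unfolding c0_def using cell_prop[OF s0_inc tt_pos] by auto
lemma c1_prop: "s1 (c1 k) \<le> tt k" "tt k < s1 (c1 k + 1)"
  unfolding c1_def using cell_prop[OF s1_inc tt_pos] by auto
lemma cu_prop: "s (cu k) \<le> uu k" "uu k < s (cu k + 1)"
  unfolding cu_def using cell_prop[OF s_inc uu_pos] by auto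

lemma j0_eq: "j0 k = c0 k + (if ty0 (c0 k) then 1 else 0)" by (simp add: j0_def jsel_def c0_def)
lemma j1_eq: "j1 k = c1 k + (if ty1 (c1 k) then 1 else 0)" by (simp add: j1_def jsel_def c1_def)
lemma mk_eq: "mk k = cu k + (if tys (cu k) then 1 else 0)" by (simp add: mk_def jsel_def cu_def)

lemma fl0a: assumes "ty0 a" "c0 k = a" "c0 k' = a" shows "\<phi>0 (tt k') \<le> 2 * \<phi>0 (tt k)"
proof -
  have "\<phi>0 (s0 (a+1)) \<le> 2 * \<phi>0 (s0 a)" using ty0_ok assms(1) unfolding typ_ok_def by blast
  then show ?thesis using cell_flat1[OF qc0 s0_inc, of a "tt k" "tt k'"] c0_prop[of k] c0_prop[of k'] assms by simp
qed

lemma fl0b: assumes "\<not> ty0 a" "c0 k = a" "c0 k' = a" shows "\<phi>0 (tt k) / tt k \<le> 2 * (\<phi>0 (tt k') / tt k')"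
proof -
  have "\<phi>0 (s0 a) / s0 a \<le> 2 * (\<phi>0 (s0 (a+1)) / s0 (a+1))" using ty0_ok assms(1) unfolding typ_ok_def by blast
  then show ?thesis using cell_flat2[OF qc0 s0_inc, of a "tt k" "tt k'"] c0_prop[of k] c0_prop[of k'] assms by simp
qed

lemma fl1a: assumes "ty1 a" "c1 k = a" "c1 k' = a" shows "\<phi>1 (tt k') \<le> 2 * \<phi>1 (tt k)"
proof -
  have "\<phi>1 (s1 (a+1)) \<le> 2 * \<phi>1 (s1 a)" using ty1_ok assms(1) unfolding typ_ok_def by blast
  then show ?thesis using cell_flat1[OF qc1 s1_inc, of a "tt k" "tt k'"] c1_prop[of k] c1_prop[of k'] assms by simp
qed

lemma fl1b: assumes "\<not> ty1 a" "c1 k = a" "c1 k' = a" shows "\<phi>1 (tt k) / tt k \<le> 2 * (\<phi>1 (tt k') / tt k')"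
proof -
  have "\<phi>1 (s1 a) / s1 a \<le> 2 * (\<phi>1 (s1 (a+1)) / s1 (a+1))" using ty1_ok assms(1) unfolding typ_ok_def by blast
  then show ?thesis using cell_flat2[OF qc1 s1_inc, of a "tt k" "tt k'"] c1_prop[of k] c1_prop[of k'] assms by simp
qed

lemma flsa: assumes "tys b" "cu k = b" "cu k' = b" shows "\<phi> (uu k') \<le> 2 * \<phi> (uu k)"
proof -
  have "\<phi> (s (b+1)) \<le> 2 * \<phi> (s b)" using tys_ok assms(1) unfolding typ_ok_def by blast
  then show ?thesis using cell_flat1[OF qc s_inc, of b "uu k" "uu k'"] cu_prop[of k] cu_prop[of k'] assms by simp
qed

lemma flsb: assumes "\<not> tys b" "cu k = b" "cu k' = b" shows "\<phi> (uu k) / uu k \<le> 2 * (\<phi> (uu k') / uu k')"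
proof -
  have "\<phi> (s b) / s b \<le> 2 * (\<phi> (s (b+1)) / s (b+1))" using tys_ok assms(1) unfolding typ_ok_def by blast
  then show ?thesis using cell_flat2[OF qc s_inc, of b "uu k" "uu k'"] cu_prop[of k] cu_prop[of k'] assms by simp
qed

lemma w0_nn: "0 \<le> w0 m k" unfolding w0_def using s_pos[of m] uu_pos[of k] by simp
lemma w1_nn: "0 \<le> w1 m k" unfolding w1_def using s_pos[of m] uu_pos[of k] by simp
lemma w0_le1: "w0 m k \<le> 1" unfolding w0_def by simp
lemma w1_le1: "w1 m k \<le> 1" unfolding w1_def by simp

lemma w_Z1: assumes "tys (cu k)" shows "mk k = cu k + 1" "w0 (mk k) k = 1" "w1 (mk k) k = uu k / s (mk k)"
proof -
  show m: "mk k = cu k + 1" using assms by (simp add: mk_eq)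
  have lt: "uu k < s (mk k)" using cu_prop[of k] m by simp
  show "w0 (mk k) k = 1" using lt uu_pos[of k] by (simp add: w0_def min_def field_simps)
  show "w1 (mk k) k = uu k / s (mk k)" using lt s_pos[of "mk k"] by (simp add: w1_def min_def field_simps)
qed

lemma w_Z2: assumes "\<not> tys (cu k)" shows "mk k = cu k" "w0 (mk k) k = s (mk k) / uu k" "w1 (mk k) k = 1"
proof -
  show m: "mk k = cu k" using assms by (simp add: mk_eq)
  have le: "s (mk k) \<le> uu k" using cu_prop[of k] m by simp
  show "w0 (mk k) k = s (mk k) / uu k" using le uu_pos[of k] by (simp add: w0_def min_def field_simps)
  show "w1 (mk k) k = 1" using le s_pos[of "mk k"] by (simp add: w1_def min_def field_simps)
qed

lemma rk_dec': "k \<le> k' \<Longrightarrow> 2 ^ nat (k' - k) * ((\<phi>0 (tt k') / tt k') * \<phi> (uu k')) \<le> (\<phi>0 (tt k) / tt k) * \<phi> (uu k)"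
  using rk_dec[of k k'] by (simp add: rk_eq)
lemma rk_inc': "k \<le> k' \<Longrightarrow> 2 ^ nat (k' - k) * (\<phi>0 (tt k) * \<phi> (uu k)) \<le> \<phi>0 (tt k') * \<phi> (uu k')"
  using rk_inc[of k k'] by (simp add: rk_eq)
lemma rk_dec1: "k \<le> k' \<Longrightarrow> 2 ^ nat (k' - k) * ((\<phi>1 (tt k') / tt k') * (\<phi> (uu k') / uu k')) \<le> (\<phi>1 (tt k) / tt k) * (\<phi> (uu k) / uu k)"
  using rk_dec[of k k'] by (simp add: rk_eq1 mult.commute)
lemma rk_inc1: "k \<le> k' \<Longrightarrow> 2 ^ nat (k' - k) * (\<phi>1 (tt k) * (\<phi> (uu k) / uu k)) \<le> \<phi>1 (tt k') * (\<phi> (uu k') / uu k')"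
  using rk_inc[of k k'] by (simp add: rk_eq1)

lemma pos_facts: "0 < \<phi>0 (tt k) / tt k" "0 < \<phi>1 (tt k) / tt k" "0 < \<phi> (uu k) / uu k"
  using f0_pos[of k] f1_pos[of k] tt_pos[of k] fu_pos[of k] uu_pos[of k] by auto

lemma hw: fixes S u u' :: real assumes "0 < S" "0 < u" "0 < u'" "2 ^ d * u \<le> 4 * u'" "S / u \<le> 1"
  shows "S / u' \<le> 4 * (1/2) ^ d"
proof -
  have "2 ^ d * (S / u') \<le> 4 * (S / u)"
  proof -
    have "S * (2 ^ d * u) \<le> S * (4 * u')" using assms(1,4) by simp
    then show ?thesis using assms(2,3) by (simp add: field_simps)
  qed
  then have "S / u' \<le> 4 * (1/2) ^ d * (S / u)" using assms by (intro pow_half2) auto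
  also have "\<dots> \<le> 4 * (1/2) ^ d * 1" using assms(5) by (intro mult_left_mono) auto
  finally show ?thesis by simp
qed

lemma hw2: fixes S u u' :: real assumes "0 < S" "0 < u" "0 < u'" "2 ^ d * u' \<le> 4 * u" "u / S \<le> 1"
  shows "u' / S \<le> 4 * (1/2) ^ d"
proof -
  have "2 ^ d * (u' / S) \<le> 4 * (u / S)" using assms by (simp add: field_simps)
  then have "u' / S \<le> 4 * (1/2) ^ d * (u / S)" using assms by (intro pow_half2) auto
  also have "\<dots> \<le> 4 * (1/2) ^ d * 1" using assms(5) by (intro mult_left_mono) auto
  finally show ?thesis by simp
qed

lemma cls0: "zsum (\<lambda>k. if k \<in> {k. c0 k = a \<and> cu k = b \<and> mk k = m \<and> j0 k = j} then ennreal (w0 m k) else 0) \<le> ennreal 8"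
proof -
  let ?G = "{k. c0 k = a \<and> cu k = b \<and> mk k = m \<and> j0 k = j}"
  obtain L where L: "\<And>k. s0 a \<le> tt k \<Longrightarrow> L \<le> k" using sinc_bdd_below[OF tt_inc s0_pos[of a]] by blast
  obtain U where U: "\<And>k. tt k \<le> s0 (a+1) \<Longrightarrow> k \<le> U" using sinc_bdd_above[OF tt_inc] by blast
  show ?thesis
  proof (rule geo_class[where L=L and U=U])
    fix k assume "k \<in> ?G" then show "L \<le> k" using L c0_prop[of k] by auto
  next
    fix k assume "k \<in> ?G" then show "k \<le> U" using U c0_prop[of k] by force
  next
    fix k show "w0 m k \<le> 1" by (rule w0_le1)
  next
    consider (A) "ty0 a" "tys b" | (B) "\<not> ty0 a" "tys b" | (C) "ty0 a" "\<not> tys b" | (D) "\<not> ty0 a" "\<not> tys b" by blast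
    then show "(\<forall>k k'. k \<in> ?G \<longrightarrow> k' \<in> ?G \<longrightarrow> k < k' \<longrightarrow> w0 m k' \<le> 4 * (1/2) ^ nat (k' - k))
            \<or> (\<forall>k k'. k \<in> ?G \<longrightarrow> k' \<in> ?G \<longrightarrow> k < k' \<longrightarrow> w0 m k \<le> 4 * (1/2) ^ nat (k' - k))"
    proof cases
      case A
      show ?thesis
      proof (rule disjI1, intro allI impI)
        fix k k' assume G: "k \<in> ?G" "k' \<in> ?G" and lt: "k < k'"
        have kk: "k \<le> k'" using lt by simp
        have "(2::real) ^ nat (k' - k) \<le> 4"
          by (rule ratio4[OF f0_pos fu_pos f0_pos fu_pos rk_inc'[OF kk]])
             (use fl0a[OF A(1)] flsa[OF A(2)] G in auto)
        then have "1 \<le> 4 * (1/2::real) ^ nat (k' - k)" by (rule pow_half)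
        then show "w0 m k' \<le> 4 * (1/2) ^ nat (k' - k)" using w0_le1[of m k'] by linarith
      qed
    next
      case B
      show ?thesis
      proof (rule disjI1, intro allI impI)
        fix k k' assume G: "k \<in> ?G" "k' \<in> ?G" and lt: "k < k'"
        have kk: "k \<le> k'" using lt by simp
        have "(2::real) ^ nat (k' - k) \<le> 4"
          by (rule ratio4[OF pos_facts(1) fu_pos pos_facts(1) fu_pos rk_dec'[OF kk]])
             (use fl0b[OF B(1)] flsa[OF B(2)] G in auto)
        then have "1 \<le> 4 * (1/2::real) ^ nat (k' - k)" by (rule pow_half)
        then show "w0 m k' \<le> 4 * (1/2) ^ nat (k' - k)" using w0_le1[of m k'] by linarith
      qed
    next
      case C
      show ?thesis
      proof (rule disjI1, intro allI impI)
        fix k k' assume G: "k \<in> ?G" "k' \<in> ?G" and lt: "k < k'"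
        have kk: "k \<le> k'" using lt by simp
        have e: "2 ^ nat (k' - k) * \<phi> (uu k) \<le> 2 * \<phi> (uu k')"
          by (rule decay4[OF f0_pos fu_pos f0_pos fu_pos rk_inc'[OF kk]]) (use fl0a[OF C(1)] G in auto)
        have u: "2 ^ nat (k' - k) * uu k \<le> 4 * uu k'"
          by (rule uconv[OF uu_pos uu_pos fu_pos fu_pos e]) (use flsb[OF C(2)] G in auto)
        have wk: "w0 m k = s m / uu k" and wk': "w0 m k' = s m / uu k'"
          using w_Z2[of k] w_Z2[of k'] C G by auto
        have "s m / uu k \<le> 1" using w0_le1[of m k] wk by simp
        then show "w0 m k' \<le> 4 * (1/2) ^ nat (k' - k)"
          unfolding wk' by (rule hw[OF s_pos uu_pos uu_pos u])
      qed
    next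
      case D
      show ?thesis
      proof (rule disjI2, intro allI impI)
        fix k k' assume G: "k \<in> ?G" "k' \<in> ?G" and lt: "k < k'"
        have kk: "k \<le> k'" using lt by simp
        have e: "2 ^ nat (k' - k) * \<phi> (uu k') \<le> 2 * \<phi> (uu k)"
          by (rule decay4[OF pos_facts(1) fu_pos pos_facts(1) fu_pos rk_dec'[OF kk]]) (use fl0b[OF D(1)] G in auto)
        have u: "2 ^ nat (k' - k) * uu k' \<le> 4 * uu k"
          by (rule uconv[OF uu_pos uu_pos fu_pos fu_pos e]) (use flsb[OF D(2)] G in auto)
        have wk: "w0 m k = s m / uu k" and wk': "w0 m k' = s m / uu k'"
          using w_Z2[of k] w_Z2[of k'] D G by auto
        have "s m / uu k' \<le> 1" using w0_le1[of m k'] wk' by simp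
        then show "w0 m k \<le> 4 * (1/2) ^ nat (k' - k)"
          unfolding wk by (rule hw[OF s_pos uu_pos uu_pos u])
      qed
    qed
  qed
qed

lemma cls1: "zsum (\<lambda>k. if k \<in> {k. c1 k = a \<and> cu k = b \<and> mk k = m \<and> j1 k = j} then ennreal (w1 m k) else 0) \<le> ennreal 8"
proof -
  let ?G = "{k. c1 k = a \<and> cu k = b \<and> mk k = m \<and> j1 k = j}"
  obtain L where L: "\<And>k. s1 a \<le> tt k \<Longrightarrow> L \<le> k" using sinc_bdd_below[OF tt_inc s1_pos[of a]] by blast
  obtain U where U: "\<And>k. tt k \<le> s1 (a+1) \<Longrightarrow> k \<le> U" using sinc_bdd_above[OF tt_inc] by blast
  show ?thesis
  proof (rule geo_class[where L=L and U=U])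
    fix k assume "k \<in> ?G" then show "L \<le> k" using L c1_prop[of k] by auto
  next
    fix k assume "k \<in> ?G" then show "k \<le> U" using U c1_prop[of k] by force
  next
    fix k show "w1 m k \<le> 1" by (rule w1_le1)
  next
    consider (A) "ty1 a" "\<not> tys b" | (B) "\<not> ty1 a" "\<not> tys b" | (C) "ty1 a" "tys b" | (D) "\<not> ty1 a" "tys b" by blast
    then show "(\<forall>k k'. k \<in> ?G \<longrightarrow> k' \<in> ?G \<longrightarrow> k < k' \<longrightarrow> w1 m k' \<le> 4 * (1/2) ^ nat (k' - k))
            \<or> (\<forall>k k'. k \<in> ?G \<longrightarrow> k' \<in> ?G \<longrightarrow> k < k' \<longrightarrow> w1 m k \<le> 4 * (1/2) ^ nat (k' - k))"
    proof cases
      case A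
      show ?thesis
      proof (rule disjI1, intro allI impI)
        fix k k' assume G: "k \<in> ?G" "k' \<in> ?G" and lt: "k < k'"
        have kk: "k \<le> k'" using lt by simp
        have "(2::real) ^ nat (k' - k) \<le> 4"
          by (rule ratio4[OF f1_pos pos_facts(3) f1_pos pos_facts(3) rk_inc1[OF kk]])
             (use fl1a[OF A(1)] flsb[OF A(2)] G in auto)
        then have "1 \<le> 4 * (1/2::real) ^ nat (k' - k)" by (rule pow_half)
        then show "w1 m k' \<le> 4 * (1/2) ^ nat (k' - k)" using w1_le1[of m k'] by linarith
      qed
    next
      case B
      show ?thesis
      proof (rule disjI1, intro allI impI)
        fix k k' assume G: "k \<in> ?G" "k' \<in> ?G" and lt: "k < k'"
        have kk: "k \<le> k'" using lt by simp
        have "(2::real) ^ nat (k' - k) \<le> 4"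
          by (rule ratio4[OF pos_facts(2) pos_facts(3) pos_facts(2) pos_facts(3) rk_dec1[OF kk]])
             (use fl1b[OF B(1)] flsb[OF B(2)] G in auto)
        then have "1 \<le> 4 * (1/2::real) ^ nat (k' - k)" by (rule pow_half)
        then show "w1 m k' \<le> 4 * (1/2) ^ nat (k' - k)" using w1_le1[of m k'] by linarith
      qed
    next
      case C
      show ?thesis
      proof (rule disjI1, intro allI impI)
        fix k k' assume G: "k \<in> ?G" "k' \<in> ?G" and lt: "k < k'"
        have kk: "k \<le> k'" using lt by simp
        have e: "2 ^ nat (k' - k) * (\<phi> (uu k) / uu k) \<le> 2 * (\<phi> (uu k') / uu k')"
          by (rule decay4[OF f1_pos pos_facts(3) f1_pos pos_facts(3) rk_inc1[OF kk]]) (use fl1a[OF C(1)] G in auto)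
        have u: "2 ^ nat (k' - k) * uu k' \<le> 4 * uu k"
          by (rule uconv2[OF uu_pos uu_pos fu_pos fu_pos e]) (use flsa[OF C(2)] G in auto)
        have wk: "w1 m k = uu k / s m" and wk': "w1 m k' = uu k' / s m"
          using w_Z1[of k] w_Z1[of k'] C G by auto
        have "uu k / s m \<le> 1" using w1_le1[of m k] wk by simp
        then show "w1 m k' \<le> 4 * (1/2) ^ nat (k' - k)"
          unfolding wk' by (rule hw2[OF s_pos uu_pos uu_pos u])
      qed
    next
      case D
      show ?thesis
      proof (rule disjI2, intro allI impI)
        fix k k' assume G: "k \<in> ?G" "k' \<in> ?G" and lt: "k < k'"
        have kk: "k \<le> k'" using lt by simp
        have e: "2 ^ nat (k' - k) * (\<phi> (uu k') / uu k') \<le> 2 * (\<phi> (uu k) / uu k)"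
          by (rule decay4[OF pos_facts(2) pos_facts(3) pos_facts(2) pos_facts(3) rk_dec1[OF kk]]) (use fl1b[OF D(1)] G in auto)
        have u: "2 ^ nat (k' - k) * uu k \<le> 4 * uu k'"
          by (rule uconv2[OF uu_pos uu_pos fu_pos fu_pos e]) (use flsa[OF D(2)] G in auto)
        have wk: "w1 m k = uu k / s m" and wk': "w1 m k' = uu k' / s m"
          using w_Z1[of k] w_Z1[of k'] D G by auto
        have "uu k' / s m \<le> 1" using w1_le1[of m k'] wk' by simp
        then show "w1 m k \<le> 4 * (1/2) ^ nat (k' - k)"
          unfolding wk by (rule hw2[OF s_pos uu_pos uu_pos u])
      qed
    qed
  qed
qed

lemma four_le: fixes a b c d x :: ennreal
  assumes "x \<le> a \<or> x \<le> b \<or> x \<le> c \<or> x \<le> d" shows "x \<le> a + b + c + d"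
proof -
  have "a \<le> a + b + c + d" "b \<le> a + b + c + d" "c \<le> a + b + c + d" "d \<le> a + b + c + d"
    by (simp_all add: add.assoc add_increasing2 add_increasing)
  then show ?thesis using assms by (meson order_trans)
qed

lemma ML0: "zsum (\<lambda>k. if mk k = m \<and> j0 k = j then ennreal (w0 m k) else 0) \<le> ennreal 32"
proof -
  let ?g = "\<lambda>a b k. if k \<in> {k. c0 k = a \<and> cu k = b \<and> mk k = m \<and> j0 k = j} then ennreal (w0 m k) else 0"
  have "zsum (\<lambda>k. if mk k = m \<and> j0 k = j then ennreal (w0 m k) else 0)
      \<le> zsum (\<lambda>k. ?g (j-1) (m-1) k + ?g (j-1) m k + ?g j (m-1) k + ?g j m k)"
  proof (rule zsum_mono)
    fix k
    show "(if mk k = m \<and> j0 k = j then ennreal (w0 m k) else 0) \<le> ?g (j-1) (m-1) k + ?g (j-1) m k + ?g j (m-1) k + ?g j m k"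
    proof (cases "mk k = m \<and> j0 k = j")
      case True
      have "c0 k = j - 1 \<or> c0 k = j" using True j0_eq[of k] by (auto split: if_splits)
      moreover have "cu k = m - 1 \<or> cu k = m" using True mk_eq[of k] by (auto split: if_splits)
      ultimately show ?thesis using True by (intro four_le) auto
    next
      case False
      then have "(if mk k = m \<and> j0 k = j then ennreal (w0 m k) else 0) = 0" by (rule if_not_P)
      then show ?thesis by (simp only: zero_le)
    qed
  qed
  also have "\<dots> = zsum (?g (j-1) (m-1)) + zsum (?g (j-1) m) + zsum (?g j (m-1)) + zsum (?g j m)"
    by (simp add: zsum_add)
  also have "\<dots> \<le> ennreal 8 + ennreal 8 + ennreal 8 + ennreal 8"
    by (intro add_mono cls0)
  also have "\<dots> = ennreal 32" by (simp flip: ennreal_plus)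
  finally show ?thesis .
qed

lemma ML1: "zsum (\<lambda>k. if mk k = m \<and> j1 k = j then ennreal (w1 m k) else 0) \<le> ennreal 32"
proof -
  let ?g = "\<lambda>a b k. if k \<in> {k. c1 k = a \<and> cu k = b \<and> mk k = m \<and> j1 k = j} then ennreal (w1 m k) else 0"
  have "zsum (\<lambda>k. if mk k = m \<and> j1 k = j then ennreal (w1 m k) else 0)
      \<le> zsum (\<lambda>k. ?g (j-1) (m-1) k + ?g (j-1) m k + ?g j (m-1) k + ?g j m k)"
  proof (rule zsum_mono)
    fix k
    show "(if mk k = m \<and> j1 k = j then ennreal (w1 m k) else 0) \<le> ?g (j-1) (m-1) k + ?g (j-1) m k + ?g j (m-1) k + ?g j m k"
    proof (cases "mk k = m \<and> j1 k = j")
      case True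
      have "c1 k = j - 1 \<or> c1 k = j" using True j1_eq[of k] by (auto split: if_splits)
      moreover have "cu k = m - 1 \<or> cu k = m" using True mk_eq[of k] by (auto split: if_splits)
      ultimately show ?thesis using True by (intro four_le) auto
    next
      case False
      then have "(if mk k = m \<and> j1 k = j then ennreal (w1 m k) else 0) = 0" by (rule if_not_P)
      then show ?thesis by (simp only: zero_le)
    qed
  qed
  also have "\<dots> = zsum (?g (j-1) (m-1)) + zsum (?g (j-1) m) + zsum (?g j (m-1)) + zsum (?g j m)"
    by (simp add: zsum_add)
  also have "\<dots> \<le> ennreal 8 + ennreal 8 + ennreal 8 + ennreal 8"
    by (intro add_mono cls1)
  also have "\<dots> = ennreal 32" by (simp flip: ennreal_plus)
  finally show ?thesis .
qed

end

lemma Kfun_ge_c: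
  assumes E: "0 < E" and H: "\<And>x0 x1. \<forall>i. x i = x0 i + x1 i \<Longrightarrow> X \<le> ennreal E * (N0 x0 + ennreal t * N1 x1)"
  shows "X \<le> ennreal E * Kfun N0 N1 t x"
proof -
  have EE: "ennreal E * ennreal (1 / E) = 1" using E by (simp add: ennreal_mult[symmetric])
  have "X * ennreal (1 / E) \<le> Kfun N0 N1 t x"
  proof (rule Kfun_ge)
    fix x0 x1 assume "\<forall>i. x i = x0 i + x1 i"
    then have "X * ennreal (1 / E) \<le> ennreal E * (N0 x0 + ennreal t * N1 x1) * ennreal (1 / E)"
      using H by (intro mult_right_mono) auto
    also have "\<dots> = (ennreal E * ennreal (1 / E)) * (N0 x0 + ennreal t * N1 x1)" by (simp add: mult_ac)
    also have "\<dots> = N0 x0 + ennreal t * N1 x1" using EE by simp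
    finally show "X * ennreal (1 / E) \<le> N0 x0 + ennreal t * N1 x1" .
  qed
  then have "X * ennreal (1 / E) * ennreal E \<le> Kfun N0 N1 t x * ennreal E" by (rule mult_right_mono) simp
  moreover have "X * ennreal (1 / E) * ennreal E = X" using EE by (simp add: mult.assoc mult.commute[of "ennreal (1 / E)"])
  ultimately show ?thesis by (simp add: mult.commute)
qed

lemma zsum_group: "zsum F = zsum (\<lambda>m. zsum (\<lambda>k. if g k = m then F k else 0))"
proof -
  have "zsum (\<lambda>m. zsum (\<lambda>k. if g k = m then F k else 0)) = zsum (\<lambda>k. zsum (\<lambda>m. if g k = m then F k else 0))"
    by (rule zsum_swap)
  also have "\<dots> = zsum F"
  proof (rule arg_cong[where f=zsum], rule ext)
    fix k
    have "(\<lambda>m. if g k = m then F k else 0) = (\<lambda>m. if m = g k then F k else 0)" by auto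
    then show "zsum (\<lambda>m. if g k = m then F k else 0) = F k" by (simp add: zsum_single)
  qed
  finally show ?thesis by simp
qed

lemma regroup:
  fixes W :: "int \<Rightarrow> ennreal"
  assumes C: "\<And>j. zsum (\<lambda>k. if P k \<and> J k = j then W k else 0) \<le> C"
  shows "zsum (\<lambda>k. if P k then W k * F (J k) else 0) \<le> C * zsum F"
proof -
  have "zsum (\<lambda>k. if P k then W k * F (J k) else 0)
      = zsum (\<lambda>k. zsum (\<lambda>j. (if P k \<and> J k = j then W k else 0) * F j))"
  proof (rule arg_cong[where f=zsum], rule ext)
    fix k
    have "(\<lambda>j. (if P k \<and> J k = j then W k else 0) * F j) = (\<lambda>j. if j = J k then (if P k then W k * F (J k) else 0) else 0)"
      by auto
    then show "(if P k then W k * F (J k) else 0) = zsum (\<lambda>j. (if P k \<and> J k = j then W k else 0) * F j)"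
      by (simp add: zsum_single)
  qed
  also have "\<dots> = zsum (\<lambda>j. zsum (\<lambda>k. (if P k \<and> J k = j then W k else 0) * F j))"
    by (rule zsum_swap)
  also have "\<dots> = zsum (\<lambda>j. zsum (\<lambda>k. if P k \<and> J k = j then W k else 0) * F j)"
    by (simp add: zsum_cmult_right)
  also have "\<dots> \<le> zsum (\<lambda>j. C * F j)"
    by (intro zsum_mono mult_right_mono C) auto
  also have "\<dots> = C * zsum F" by (rule zsum_cmult)
  finally show ?thesis .
qed

lemma ennreal_lin:
  fixes a b c A B :: real
  assumes "0 \<le> c" "0 \<le> a" "0 \<le> A" "0 \<le> b" "0 \<le> B"
  shows "ennreal (c * (a * A + b * B)) = ennreal c * (ennreal a * ennreal A + ennreal b * ennreal B)"
proof -
  have "ennreal (c * (a * A + b * B)) = ennreal c * ennreal (a * A + b * B)"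
    using assms by (intro ennreal_mult) auto
  also have "ennreal (a * A + b * B) = ennreal (a * A) + ennreal (b * B)"
    using assms by (intro ennreal_plus) auto
  also have "ennreal (a * A) = ennreal a * ennreal A" using assms by (intro ennreal_mult) auto
  also have "ennreal (b * B) = ennreal b * ennreal B" using assms by (intro ennreal_mult) auto
  finally show ?thesis .
qed

context L310 begin

lemma w_ident: "w0 m k / \<phi>0 (tt k) = s m * w1 m k / \<phi>1 (tt k)"
proof -
  have f1: "\<phi>1 (tt k) = uu k * \<phi>0 (tt k)" using f0_pos[of k] by (simp add: uu_def)
  show ?thesis
  proof (cases "uu k \<le> s m")
    case True
    then have "w0 m k = 1" "w1 m k = uu k / s m" using uu_pos[of k] s_pos[of m] by (auto simp: w0_def w1_def min_def field_simps)
    then show ?thesis using f1 uu_pos[of k] s_pos[of m] f0_pos[of k] by (simp add: field_simps)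
  next
    case False
    then have "w0 m k = s m / uu k" "w1 m k = 1" using uu_pos[of k] s_pos[of m] by (auto simp: w0_def w1_def min_def field_simps)
    then show ?thesis using f1 uu_pos[of k] s_pos[of m] f0_pos[of k] by (simp add: field_simps)
  qed
qed

lemma mk_prop: "1 / (2 * \<phi> (uu k)) \<le> w0 (mk k) k / \<phi> (s (mk k))"
  using jsel_prop[OF qc s_inc tys_ok uu_pos, of k] unfolding mk_def w0_def .

lemma G0: assumes "\<forall>i. x i = x0 i + x1 i"
  shows "ennreal (\<bar>x0 k\<bar> / \<phi>0 (tt k)) \<le> 2 * (Kfun Nb0 Nb1 (s0 (j0 k)) x0 / ennreal (\<phi>0 (s0 (j0 k))))"
proof -
  let ?j = "j0 k"
  let ?mn = "min 1 (s0 ?j / tt k)"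
  have al: "1 / (2 * \<phi>0 (tt k)) \<le> ?mn / \<phi>0 (s0 ?j)"
    using jsel_prop[OF qc0 s0_inc ty0_ok tt_pos, of k] unfolding j0_def .
  have "\<bar>x0 k\<bar> / \<phi>0 (tt k) = 2 * \<bar>x0 k\<bar> * (1 / (2 * \<phi>0 (tt k)))" by simp
  also have "\<dots> \<le> 2 * \<bar>x0 k\<bar> * (?mn / \<phi>0 (s0 ?j))" using al by (intro mult_left_mono) auto
  also have "\<dots> = 2 * (?mn * \<bar>x0 k\<bar>) * (1 / \<phi>0 (s0 ?j))" by simp
  finally have r: "\<bar>x0 k\<bar> / \<phi>0 (tt k) \<le> 2 * (?mn * \<bar>x0 k\<bar>) * (1 / \<phi>0 (s0 ?j))" .
  have "ennreal (\<bar>x0 k\<bar> / \<phi>0 (tt k)) \<le> ennreal (2 * (?mn * \<bar>x0 k\<bar>) * (1 / \<phi>0 (s0 ?j)))"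
    using r by (rule ennreal_leI)
  also have "\<dots> = 2 * ennreal (?mn * \<bar>x0 k\<bar>) * ennreal (1 / \<phi>0 (s0 ?j))"
    using ennreal_mult3[of 2 "?mn * \<bar>x0 k\<bar>" "1 / \<phi>0 (s0 ?j)"] s0_pos[of ?j] tt_pos[of k] fs0_pos[of ?j] by simp
  also have "\<dots> \<le> 2 * Kfun Nb0 Nb1 (s0 ?j) x0 * ennreal (1 / \<phi>0 (s0 ?j))"
    using Kb_ge[of q "s0 ?j" tt k x0, OF q s0_pos tt_pos] by (intro mult_right_mono mult_left_mono) auto
  also have "\<dots> = 2 * (Kfun Nb0 Nb1 (s0 ?j) x0 / ennreal (\<phi>0 (s0 ?j)))"
    using fs0_pos[of ?j] by (simp add: ennreal_div_eq mult.assoc)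
  finally show ?thesis .
qed

lemma H0: assumes "\<forall>i. x i = x0 i + x1 i"
  shows "ennreal (\<bar>x1 k\<bar> / \<phi>1 (tt k)) \<le> 2 * (Kfun Nb0 Nb1 (s1 (j1 k)) x1 / ennreal (\<phi>1 (s1 (j1 k))))"
proof -
  let ?j = "j1 k"
  let ?mn = "min 1 (s1 ?j / tt k)"
  have al: "1 / (2 * \<phi>1 (tt k)) \<le> ?mn / \<phi>1 (s1 ?j)"
    using jsel_prop[OF qc1 s1_inc ty1_ok tt_pos, of k] unfolding j1_def .
  have "\<bar>x1 k\<bar> / \<phi>1 (tt k) = 2 * \<bar>x1 k\<bar> * (1 / (2 * \<phi>1 (tt k)))" by simp
  also have "\<dots> \<le> 2 * \<bar>x1 k\<bar> * (?mn / \<phi>1 (s1 ?j))" using al by (intro mult_left_mono) auto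
  also have "\<dots> = 2 * (?mn * \<bar>x1 k\<bar>) * (1 / \<phi>1 (s1 ?j))" by simp
  finally have r: "\<bar>x1 k\<bar> / \<phi>1 (tt k) \<le> 2 * (?mn * \<bar>x1 k\<bar>) * (1 / \<phi>1 (s1 ?j))" .
  have "ennreal (\<bar>x1 k\<bar> / \<phi>1 (tt k)) \<le> ennreal (2 * (?mn * \<bar>x1 k\<bar>) * (1 / \<phi>1 (s1 ?j)))"
    using r by (rule ennreal_leI)
  also have "\<dots> = 2 * ennreal (?mn * \<bar>x1 k\<bar>) * ennreal (1 / \<phi>1 (s1 ?j))"
    using ennreal_mult3[of 2 "?mn * \<bar>x1 k\<bar>" "1 / \<phi>1 (s1 ?j)"] s1_pos[of ?j] tt_pos[of k] fs1_pos[of ?j] by simp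
  also have "\<dots> \<le> 2 * Kfun Nb0 Nb1 (s1 ?j) x1 * ennreal (1 / \<phi>1 (s1 ?j))"
    using Kb_ge[of q "s1 ?j" tt k x1, OF q s1_pos tt_pos] by (intro mult_right_mono mult_left_mono) auto
  also have "\<dots> = 2 * (Kfun Nb0 Nb1 (s1 ?j) x1 / ennreal (\<phi>1 (s1 ?j)))"
    using fs1_pos[of ?j] by (simp add: ennreal_div_eq mult.assoc)
  finally show ?thesis .
qed

lemma LBk_real: assumes "\<forall>i. x i = x0 i + x1 i"
  shows "bx x k \<le> (2 / \<phi> (s (mk k))) * (w0 (mk k) k * (\<bar>x0 k\<bar> / \<phi>0 (tt k)) + s (mk k) * w1 (mk k) k * (\<bar>x1 k\<bar> / \<phi>1 (tt k)))"
proof -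
  let ?m = "mk k"
  let ?f0 = "\<phi>0 (tt k)" and ?f1 = "\<phi>1 (tt k)" and ?fs = "\<phi> (s ?m)" and ?w0 = "w0 ?m k" and ?w1 = "w1 ?m k"
  have f0: "0 < ?f0" by (rule f0_pos)
  have f1: "0 < ?f1" by (rule f1_pos)
  have fs: "0 < ?fs" by (rule fs_pos)
  have w0n: "0 \<le> ?w0" by (rule w0_nn)
  have mp: "1 / (2 * \<phi> (uu k)) \<le> ?w0 / ?fs" by (rule mk_prop)
  have inv: "1 / rk k \<le> 2 * ?w0 / (?f0 * ?fs)"
  proof -
    have "(2 / ?f0) * (1 / (2 * \<phi> (uu k))) \<le> (2 / ?f0) * (?w0 / ?fs)"
      using mp f0 by (intro mult_left_mono) auto
    then show ?thesis using f0 fs fu_pos[of k] by (simp add: rk_eq field_simps)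
  qed
  have xk: "\<bar>x k\<bar> \<le> \<bar>x0 k\<bar> + \<bar>x1 k\<bar>" using assms by (simp add: abs_triangle_ineq)
  have "bx x k = \<bar>x k\<bar> * (1 / rk k)" by (simp add: bx_def)
  also have "\<dots> \<le> (\<bar>x0 k\<bar> + \<bar>x1 k\<bar>) * (2 * ?w0 / (?f0 * ?fs))"
    using xk inv rk_pos[of k] by (intro mult_mono) auto
  also have "\<dots> = (2 / ?fs) * (?w0 * (\<bar>x0 k\<bar> / ?f0) + (?w0 / ?f0) * \<bar>x1 k\<bar>)"
    using f0 fs by (simp add: field_simps)
  also have "?w0 / ?f0 = s ?m * ?w1 / ?f1" by (rule w_ident)
  also have "(2 / ?fs) * (?w0 * (\<bar>x0 k\<bar> / ?f0) + s ?m * ?w1 / ?f1 * \<bar>x1 k\<bar>)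
      = (2 / ?fs) * (?w0 * (\<bar>x0 k\<bar> / ?f0) + s ?m * ?w1 * (\<bar>x1 k\<bar> / ?f1))"
    by simp
  finally show ?thesis .
qed

lemma LBk: assumes dec: "\<forall>i. x i = x0 i + x1 i"
  shows "ennreal (bx x k) \<le> ennreal (4 / \<phi> (s (mk k))) *
     (ennreal (w0 (mk k) k) * (Kfun Nb0 Nb1 (s0 (j0 k)) x0 / ennreal (\<phi>0 (s0 (j0 k))))
      + ennreal (s (mk k) * w1 (mk k) k) * (Kfun Nb0 Nb1 (s1 (j1 k)) x1 / ennreal (\<phi>1 (s1 (j1 k)))))"
proof -
  let ?m = "mk k"
  let ?A = "\<bar>x0 k\<bar> / \<phi>0 (tt k)" and ?B = "\<bar>x1 k\<bar> / \<phi>1 (tt k)"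
  let ?g = "Kfun Nb0 Nb1 (s0 (j0 k)) x0 / ennreal (\<phi>0 (s0 (j0 k)))"
  let ?h = "Kfun Nb0 Nb1 (s1 (j1 k)) x1 / ennreal (\<phi>1 (s1 (j1 k)))"
  have nA: "0 \<le> ?A" using f0_pos[of k] by simp
  have nB: "0 \<le> ?B" using f1_pos[of k] by simp
  have n0: "0 \<le> w0 ?m k" by (rule w0_nn)
  have n1: "0 \<le> s ?m * w1 ?m k" using s_pos[of ?m] w1_nn[of ?m k] by simp
  have nf: "0 \<le> 2 / \<phi> (s ?m)" using fs_pos[of ?m] by simp
  have "ennreal (bx x k) \<le> ennreal ((2 / \<phi> (s ?m)) * (w0 ?m k * ?A + s ?m * w1 ?m k * ?B))"
    using LBk_real[OF dec] by (rule ennreal_leI)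
  also have "\<dots> = ennreal (2 / \<phi> (s ?m)) * (ennreal (w0 ?m k) * ennreal ?A + ennreal (s ?m * w1 ?m k) * ennreal ?B)"
    using nA nB n0 n1 nf by (intro ennreal_lin)
  also have "\<dots> \<le> ennreal (2 / \<phi> (s ?m)) * (ennreal (w0 ?m k) * (2 * ?g) + ennreal (s ?m * w1 ?m k) * (2 * ?h))"
    using G0[OF dec, of k] H0[OF dec, of k] by (intro mult_left_mono add_mono) auto
  also have "\<dots> = (ennreal (2 / \<phi> (s ?m)) * 2) * (ennreal (w0 ?m k) * ?g + ennreal (s ?m * w1 ?m k) * ?h)"
    by (simp add: algebra_simps)
  also have "ennreal (2 / \<phi> (s ?m)) * 2 = ennreal (4 / \<phi> (s ?m))"
  proof -
    have "ennreal (2 / \<phi> (s ?m)) * 2 = ennreal (2 / \<phi> (s ?m)) * ennreal 2" by simp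
    also have "\<dots> = ennreal (2 / \<phi> (s ?m) * 2)" using nf by (rule ennreal_mult[symmetric]) simp
    finally show ?thesis by simp
  qed
  finally show ?thesis .
qed

lemma lower_top: assumes pt: "p = top" shows "Mn x \<le> ennreal 4 * Outer x"
proof -
  have "ennreal (bx x k) \<le> ennreal 4 * Outer x" for k
  proof -
    let ?m = "mk k"
    have fs: "0 < \<phi> (s ?m)" by (rule fs_pos)
    have "ennreal (bx x k) \<le> ennreal (4 / \<phi> (s ?m)) * Kfun N0 N1 (s ?m) x"
    proof (rule Kfun_ge_c)
      show "0 < 4 / \<phi> (s ?m)" using fs by simp
    next
      fix x0 x1 assume dec: "\<forall>i. x i = x0 i + x1 i"
      let ?g = "Kfun Nb0 Nb1 (s0 (j0 k)) x0 / ennreal (\<phi>0 (s0 (j0 k)))"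
      let ?h = "Kfun Nb0 Nb1 (s1 (j1 k)) x1 / ennreal (\<phi>1 (s1 (j1 k)))"
      have g: "?g \<le> N0 x0" unfolding pt Kspace_def by (rule lp_ge) simp
      have h: "?h \<le> N1 x1" unfolding pt Kspace_def by (rule lp_ge) simp
      have w0: "ennreal (w0 ?m k) \<le> 1" using w0_le1 by (simp add: ennreal_le_1)
      have w1: "ennreal (s ?m * w1 ?m k) \<le> ennreal (s ?m)"
        using w1_le1[of ?m k] s_pos[of ?m] w1_nn[of ?m k] by (intro ennreal_leI) (simp add: mult_left_le)
      have "ennreal (bx x k) \<le> ennreal (4 / \<phi> (s ?m)) * (ennreal (w0 ?m k) * ?g + ennreal (s ?m * w1 ?m k) * ?h)"
        by (rule LBk[OF dec])
      also have "\<dots> \<le> ennreal (4 / \<phi> (s ?m)) * (1 * N0 x0 + ennreal (s ?m) * N1 x1)"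
        using w0 w1 g h by (intro mult_left_mono add_mono mult_mono) auto
      finally show "ennreal (bx x k) \<le> ennreal (4 / \<phi> (s ?m)) * (N0 x0 + ennreal (s ?m) * N1 x1)" by simp
    qed
    also have "\<dots> = ennreal 4 * (Kfun N0 N1 (s ?m) x / ennreal (\<phi> (s ?m)))"
    proof -
      have "ennreal (4 / \<phi> (s ?m)) = ennreal 4 * ennreal (1 / \<phi> (s ?m))"
        using ennreal_mult[of 4 "1 / \<phi> (s ?m)"] fs by simp
      then show ?thesis using fs by (simp add: ennreal_div_eq mult_ac)
    qed
    also have "Kfun N0 N1 (s ?m) x / ennreal (\<phi> (s ?m)) \<le> Outer x"
      unfolding pt by (subst Kspace_eq) (rule lp_ge, simp)
    finally show ?thesis by (simp add: mult_left_mono)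
  qed
  then show ?thesis using Mn_eq[of x] pt by (simp add: lp_top SUP_least)
qed

lemma pw_split:
  assumes P: "1 \<le> P" and w0: "0 \<le> a" "a \<le> 1" and w1: "0 \<le> b" "b \<le> 1" and S: "0 < S"
  shows "enn_pow P (c * (ennreal a * G + ennreal (S * b) * H))
    \<le> enn_pow P c * ennreal (2 powr P) * (ennreal a * enn_pow P G + ennreal (S powr P) * (ennreal b * enn_pow P H))"
proof -
  have P0: "0 < P" using P by simp
  have "enn_pow P (c * (ennreal a * G + ennreal (S * b) * H)) = enn_pow P c * enn_pow P (ennreal a * G + ennreal (S * b) * H)"
    using P0 by (rule ep_mult)
  also have "\<dots> \<le> enn_pow P c * (ennreal (2 powr P) * (enn_pow P (ennreal a * G) + enn_pow P (ennreal (S * b) * H)))"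
    using ep_add[OF P0] by (rule mult_left_mono) simp
  also have "enn_pow P (ennreal a * G) \<le> ennreal a * enn_pow P G"
  proof -
    have "enn_pow P (ennreal a * G) = enn_pow P (ennreal a) * enn_pow P G" using P0 by (rule ep_mult)
    also have "enn_pow P (ennreal a) \<le> ennreal a" using P w0 by (intro ep_le_self) (auto simp: ennreal_le_1)
    then have "enn_pow P (ennreal a) * enn_pow P G \<le> ennreal a * enn_pow P G" by (rule mult_right_mono) simp
    finally show ?thesis .
  qed
  also have "enn_pow P (ennreal (S * b) * H) \<le> ennreal (S powr P) * (ennreal b * enn_pow P H)"
  proof -
    have "enn_pow P (ennreal (S * b) * H) = enn_pow P (ennreal (S * b)) * enn_pow P H" using P0 by (rule ep_mult)
    also have "enn_pow P (ennreal (S * b)) = ennreal (S powr P) * enn_pow P (ennreal b)"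
    proof -
      have "enn_pow P (ennreal (S * b)) = ennreal ((S * b) powr P)" using S w1 by (intro ep_ennreal) simp
      also have "\<dots> = ennreal (S powr P * b powr P)" using S w1 by (simp add: powr_mult)
      also have "\<dots> = ennreal (S powr P) * ennreal (b powr P)" by (rule ennreal_mult) auto
      also have "ennreal (b powr P) = enn_pow P (ennreal b)" using w1 by (simp add: ep_ennreal)
      finally show ?thesis .
    qed
    also have "enn_pow P (ennreal b) \<le> ennreal b" using P w1 by (intro ep_le_self) (auto simp: ennreal_le_1)
    then have "ennreal (S powr P) * enn_pow P (ennreal b) * enn_pow P H \<le> ennreal (S powr P) * ennreal b * enn_pow P H"
      by (intro mult_right_mono mult_left_mono) auto
    finally show ?thesis by (simp add: mult.assoc)
  qed
  finally show ?thesis by (simp add: mult_left_mono add_mono mult.assoc)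
qed

lemma Sm_bound: assumes P: "1 \<le> P" "p = ennreal P"
  shows "zsum (\<lambda>k. if mk k = m then enn_pow P (ennreal (bx x k)) else 0)
     \<le> ennreal (64 * 2 powr P * 4 powr P) * enn_pow P (Kfun N0 N1 (s m) x / ennreal (\<phi> (s m)))"
proof -
  have P0: "0 < P" using P by simp
  let ?S = "zsum (\<lambda>k. if mk k = m then enn_pow P (ennreal (bx x k)) else 0)"
  define D0 where "D0 = 64 * 2 powr P"
  have D0: "0 < D0" unfolding D0_def by simp
  have fs: "0 < \<phi> (s m)" by (rule fs_pos)
  let ?c = "ennreal (4 / \<phi> (s m))"
  define E where "E = D0 powr (1/P) * (4 / \<phi> (s m))"
  have E: "0 < E" unfolding E_def using D0 fs by simp
  have key: "enn_pow (1/P) ?S \<le> ennreal E * Kfun N0 N1 (s m) x"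
  proof (rule Kfun_ge_c[OF E])
    fix x0 x1 assume dec: "\<forall>i. x i = x0 i + x1 i"
    define g where "g j = Kfun Nb0 Nb1 (s0 j) x0 / ennreal (\<phi>0 (s0 j))" for j
    define h where "h j = Kfun Nb0 Nb1 (s1 j) x1 / ennreal (\<phi>1 (s1 j))" for j
    let ?Y = "N0 x0 + ennreal (s m) * N1 x1"
    let ?K = "enn_pow P ?c * ennreal (2 powr P)"
    have "?S \<le> zsum (\<lambda>k. if mk k = m then enn_pow P (?c * (ennreal (w0 m k) * g (j0 k) + ennreal (s m * w1 m k) * h (j1 k))) else 0)"
    proof (rule zsum_mono)
      fix k
      show "(if mk k = m then enn_pow P (ennreal (bx x k)) else 0)
          \<le> (if mk k = m then enn_pow P (?c * (ennreal (w0 m k) * g (j0 k) + ennreal (s m * w1 m k) * h (j1 k))) else 0)"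
      proof (cases "mk k = m")
        case True
        have "ennreal (bx x k) \<le> ?c * (ennreal (w0 m k) * g (j0 k) + ennreal (s m * w1 m k) * h (j1 k))"
          using LBk[OF dec, of k] True unfolding g_def h_def by simp
        then show ?thesis using True P0 by (simp add: ep_mono)
      qed simp
    qed
    also have "\<dots> \<le> zsum (\<lambda>k. ?K * ((if mk k = m then ennreal (w0 m k) * enn_pow P (g (j0 k)) else 0)
          + ennreal (s m powr P) * (if mk k = m then ennreal (w1 m k) * enn_pow P (h (j1 k)) else 0)))"
    proof (rule zsum_mono)
      fix k
      show "(if mk k = m then enn_pow P (?c * (ennreal (w0 m k) * g (j0 k) + ennreal (s m * w1 m k) * h (j1 k))) else 0)
          \<le> ?K * ((if mk k = m then ennreal (w0 m k) * enn_pow P (g (j0 k)) else 0)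
          + ennreal (s m powr P) * (if mk k = m then ennreal (w1 m k) * enn_pow P (h (j1 k)) else 0))"
      proof (cases "mk k = m")
        case True
        then show ?thesis
          using pw_split[OF P(1) w0_nn[of m k] w0_le1[of m k] w1_nn[of m k] w1_le1[of m k] s_pos[of m], where c = ?c and G = "g (j0 k)" and H = "h (j1 k)"] by simp
      qed simp
    qed
    also have "\<dots> = ?K * (zsum (\<lambda>k. if mk k = m then ennreal (w0 m k) * enn_pow P (g (j0 k)) else 0)
          + ennreal (s m powr P) * zsum (\<lambda>k. if mk k = m then ennreal (w1 m k) * enn_pow P (h (j1 k)) else 0))"
      by (simp add: zsum_cmult zsum_add)
    also have "\<dots> \<le> ?K * (ennreal 32 * zsum (\<lambda>j. enn_pow P (g j)) + ennreal (s m powr P) * (ennreal 32 * zsum (\<lambda>j. enn_pow P (h j))))"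
      by (intro mult_left_mono add_mono regroup ML0 ML1) auto
    also have "zsum (\<lambda>j. enn_pow P (g j)) = enn_pow P (N0 x0)"
      unfolding g_def using lp_pow[OF P(1)] P(2) by (simp add: Kspace_def)
    also have "zsum (\<lambda>j. enn_pow P (h j)) = enn_pow P (N1 x1)"
      unfolding h_def using lp_pow[OF P(1)] P(2) by (simp add: Kspace_def)
    also have "ennreal (s m powr P) * (ennreal 32 * enn_pow P (N1 x1)) = ennreal 32 * enn_pow P (ennreal (s m) * N1 x1)"
      using P0 s_pos[of m] by (simp add: ep_mult ep_ennreal mult_ac)
    also have "enn_pow P (N0 x0) \<le> enn_pow P ?Y" using P0 by (intro ep_mono) auto
    also have "enn_pow P (ennreal (s m) * N1 x1) \<le> enn_pow P ?Y" using P0 by (intro ep_mono) auto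
    also have "?K * (ennreal 32 * enn_pow P ?Y + ennreal 32 * enn_pow P ?Y) = ennreal D0 * enn_pow P (?c * ?Y)"
    proof -
      have "?K * (ennreal 32 * enn_pow P ?Y + ennreal 32 * enn_pow P ?Y) = ?K * ((ennreal 32 + ennreal 32) * enn_pow P ?Y)"
        by (simp only: distrib_right)
      also have "ennreal 32 + ennreal 32 = ennreal 64" by (simp flip: ennreal_plus)
      also have "?K * (ennreal 64 * enn_pow P ?Y) = (ennreal 64 * ennreal (2 powr P)) * (enn_pow P ?c * enn_pow P ?Y)"
        by (simp only: mult_ac)
      also have "ennreal 64 * ennreal (2 powr P) = ennreal D0" unfolding D0_def by (simp add: ennreal_mult)
      also have "enn_pow P ?c * enn_pow P ?Y = enn_pow P (?c * ?Y)" using P0 by (simp add: ep_mult)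
      finally show ?thesis .
    qed
    finally have Sle: "?S \<le> ennreal D0 * enn_pow P (?c * ?Y)" by (simp add: mult_left_mono add_mono)
    have "enn_pow (1/P) ?S \<le> enn_pow (1/P) (ennreal D0 * enn_pow P (?c * ?Y))"
      using Sle P0 by (intro ep_mono) auto
    also have "\<dots> = ennreal (D0 powr (1/P)) * (?c * ?Y)"
      using P0 D0 by (simp add: ep_mult ep_ennreal ep_inv1)
    also have "\<dots> = ennreal E * ?Y"
    proof -
      have "ennreal E = ennreal (D0 powr (1/P)) * ?c"
        unfolding E_def using D0 fs by (intro ennreal_mult) auto
      then show ?thesis by (simp add: mult.assoc)
    qed
    finally show "enn_pow (1/P) ?S \<le> ennreal E * ?Y" .
  qed
  have "?S = enn_pow P (enn_pow (1/P) ?S)" using P0 by (simp add: ep_inv2)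
  also have "\<dots> \<le> enn_pow P (ennreal E * Kfun N0 N1 (s m) x)" using key P0 by (intro ep_mono) auto
  also have "\<dots> = ennreal (E powr P) * enn_pow P (Kfun N0 N1 (s m) x)"
    using P0 E by (simp add: ep_mult ep_ennreal)
  also have "E powr P = D0 * 4 powr P * (1 / \<phi> (s m)) powr P"
    unfolding E_def using D0 fs P0 by (simp add: powr_mult powr_powr powr_divide)
  also have "ennreal (D0 * 4 powr P * (1 / \<phi> (s m)) powr P) * enn_pow P (Kfun N0 N1 (s m) x)
      = ennreal (64 * 2 powr P * 4 powr P) * enn_pow P (Kfun N0 N1 (s m) x / ennreal (\<phi> (s m)))"
  proof -
    have "enn_pow P (Kfun N0 N1 (s m) x / ennreal (\<phi> (s m))) = enn_pow P (Kfun N0 N1 (s m) x) * ennreal ((1 / \<phi> (s m)) powr P)"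
      using fs P0 by (simp add: ennreal_div_eq ep_mult ep_ennreal)
    then show ?thesis unfolding D0_def using fs by (simp add: ennreal_mult mult_ac)
  qed
  finally show ?thesis .
qed

lemma lower_fin: assumes P: "1 \<le> P" "p = ennreal P"
  shows "Mn x \<le> ennreal ((64 * 2 powr P * 4 powr P) powr (1/P)) * Outer x"
proof -
  let ?D = "64 * 2 powr P * 4 powr P"
  have "zsum (\<lambda>k. enn_pow P (ennreal (bx x k)))
      = zsum (\<lambda>m. zsum (\<lambda>k. if mk k = m then enn_pow P (ennreal (bx x k)) else 0))"
    by (rule zsum_group)
  also have "\<dots> \<le> zsum (\<lambda>m. ennreal ?D * enn_pow P (Kfun N0 N1 (s m) x / ennreal (\<phi> (s m))))"
    by (intro zsum_mono Sm_bound[OF P])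
  also have "\<dots> = ennreal ?D * zsum (\<lambda>m. enn_pow P (Kfun N0 N1 (s m) x / ennreal (\<phi> (s m))))"
    by (rule zsum_cmult)
  finally have "lp_enn (ennreal P) (\<lambda>k. ennreal (bx x k))
      \<le> ennreal (?D powr (1/P)) * lp_enn (ennreal P) (\<lambda>m. Kfun N0 N1 (s m) x / ennreal (\<phi> (s m)))"
    by (intro lp_fin_le[OF P(1)]) auto
  then show ?thesis using Mn_eq[of x] P(2) by (subst Kspace_eq) simp
qed

lemma upper_fin': assumes P: "1 \<le> P" "p = ennreal P"
  shows "Outer x \<le> ennreal ((2 powr P * (2 * gc) powr P * (4 * gc ^ 2)) powr (1/P)) * Mn x"
proof -
  let ?D = "2 powr P * (2 * gc) powr P * (4 * gc ^ 2)"
  have P0: "0 < P" using P by simp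
  have D: "0 \<le> ?D" using gc_pos by simp
  have "Outer x = enn_pow (1/P) (enn_pow P (Outer x))" using P0 by (simp add: ep_inv1)
  also have "\<dots> \<le> enn_pow (1/P) (ennreal ?D * enn_pow P (Mn x))"
    using upper_fin[OF P, of x] P0 by (intro ep_mono) auto
  also have "\<dots> = ennreal (?D powr (1/P)) * Mn x"
    using P0 D by (simp add: ep_mult ep_ennreal ep_inv1)
  finally show ?thesis .
qed

lemma main: "equiv_norms Outer Mn"
  using p
proof (cases rule: p_cases)
  case 1
  show ?thesis unfolding equiv_norms_def
  proof (intro exI conjI allI)
    show "0 < 1 / (4 * gc)" using gc_pos by simp
    show "0 < (4::real)" by simp
    fix x
    have "ennreal (1 / (4 * gc)) * Outer x \<le> ennreal (1 / (4 * gc)) * (ennreal (4 * gc) * Mn x)"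
      using upper_top[OF 1, of x] by (rule mult_left_mono) simp
    also have "\<dots> = Mn x"
    proof -
      have "ennreal (1 / (4 * gc)) * ennreal (4 * gc) = 1"
        using gc_pos by (simp add: ennreal_mult[symmetric])
      then show ?thesis by (simp add: mult.assoc[symmetric])
    qed
    finally show "ennreal (1 / (4 * gc)) * Outer x \<le> Mn x" .
    show "Mn x \<le> ennreal 4 * Outer x" using lower_top[OF 1] .
  qed
next
  case (2 P)
  let ?Du = "(2 powr P * (2 * gc) powr P * (4 * gc ^ 2)) powr (1/P)"
  let ?Dl = "(64 * 2 powr P * 4 powr P) powr (1/P)"
  have Du: "0 < ?Du" using gc_pos by simp
  have Dl: "0 < ?Dl" by simp
  show ?thesis unfolding equiv_norms_def
  proof (intro exI conjI allI)
    show "0 < 1 / ?Du" using Du by simp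
    show "0 < ?Dl" by (rule Dl)
    fix x
    have "ennreal (1 / ?Du) * Outer x \<le> ennreal (1 / ?Du) * (ennreal ?Du * Mn x)"
      using upper_fin'[OF 2(2) 2(1), of x] by (rule mult_left_mono) simp
    also have "\<dots> = Mn x"
    proof -
      have "ennreal (1 / ?Du) * ennreal ?Du = 1"
        using Du by (simp add: ennreal_mult[symmetric])
      then show ?thesis by (simp add: mult.assoc[symmetric])
    qed
    finally show "ennreal (1 / ?Du) * Outer x \<le> Mn x" .
    show "Mn x \<le> ennreal ?Dl * Outer x" using lower_fin[OF 2(2) 2(1)] .
  qed
qed

end

theorem lemma3p10:
  fixes p q :: ennreal and \<phi>0 \<phi>1 \<phi> :: "real \<Rightarrow> real"
    and tt s0 s1 s :: "int \<Rightarrow> real"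
  assumes "1 \<le> p" and "1 \<le> q"
    and "qconcave \<phi>0" and "qconcave \<phi>1" and "qconcave \<phi>"
    and "discretizing tt (fcomp \<phi> \<phi>0 \<phi>1)"
    and "discretizing s0 \<phi>0" and "discretizing s1 \<phi>1" and "discretizing s \<phi>"
  shows "equiv_norms
     (Kspace (Kspace (lqw q (\<lambda>_. 1)) (lqw q (\<lambda>k. 1 / tt k)) s0 \<phi>0 p)
             (Kspace (lqw q (\<lambda>_. 1)) (lqw q (\<lambda>k. 1 / tt k)) s1 \<phi>1 p) s \<phi> p)
     (lqw p (\<lambda>i. 1 / fcomp \<phi> \<phi>0 \<phi>1 (tt i)))"
proof -
  interpret L: L310 p q \<phi>0 \<phi>1 \<phi> tt s0 s1 s
    using assms by unfold_locales auto
  show ?thesis by (rule L.main)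
qed

end
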